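(* Let $u:\mathbb{R}^3\times[0,\infty)\to[0,\infty)$ solve $$u_t=\operatorname{div}\big(a[u]\nabla u-u\nabla a[u]\big),\qquad -\Delta a[u]=u\quad\text{in }\mathbb{R}^3\times(0,\infty),$$ with $a[u](x,t)=\frac{1}{4\pi}\int_{\mathbb{R}^3}\frac{u(y,t)}{|x-y|}dy$, and assume $u$ satisfies the $\varepsilon$-Poincaré inequality: for every $\varepsilon>0$ there is $C_\varepsilon>0$ such that for every $t>0$ and every $\phi\in L^1_{loc}(\mathbb{R}^3)$ with finite right-hand side, $\int u(x,t)\phi^2dx\le\varepsilon\int a[u](x,t)|\nabla\phi|^2dx+C_\varepsilon\int\phi^2dx$. Let $p>1$, $k\ge0$, $R>0$, $0\le t<T$, let $Q_R\subset\mathbb{R}^3$ be a ball of radius $R$, let $\eta$ be a smooth nonnegative function supported in $Q_R$, and set $u_k=(u-k)_+$. Then for every $\varepsilon>0$ there is a constant $C(R,\varepsilon,p)$ such that $$(p-1)\int_t^T\!\!\int\eta^2uu_k^p\,dx\,ds\le\varepsilon(p-1)\int_t^T\!\!\int_{Q_R}a[u]|\nabla(\eta u_k^{p/2})|^2dx\,ds+C(R,\varepsilon,p)\int_t^T\!\!\int_{Q_R}\eta^2u_k^p\,dx\,ds,$$ $$pk\int_t^T\!\!\int\eta^2uu_k^{p-1}dx\,ds\le p\varepsilon\int_t^T\!\!\int a[u]|\nabla(\eta u_k^{p/2})|^2dx\,ds+C(R,\varepsilon,p)\int_t^T\!\!\int\eta^2u_k^p\,dx\,ds+2pk^2\int_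0^T\!\!\int\eta^2u_k^{p-1}dx\,ds.$$
   Context: $u$ is a smooth, nonnegative solution with sufficient decay at infinity. All unspecified spatial integrals are over $\mathbb{R}^3$. The constant $C(R,\varepsilon,p)$ may depend on the constants $C_\varepsilon$ of the $\varepsilon$-Poincaré inequality. *)

theory Defs
  imports "HOL-Analysis.Analysis"
begin

fun dderiv :: "('a::real_normed_vector \<Rightarrow> real) \<Rightarrow> 'a list \<Rightarrow> 'a \<Rightarrow> real" where
  "dderiv f [] = f"
| "dderiv f (v # vs) = (\<lambda>x. frechet_derivative (dderiv f vs) (at x) v)"

definition smooth_on :: "'a::real_normed_vector set \<Rightarrow> ('a \<Rightarrow> real) \<Rightarrow> bool" where
  "smooth_on S f \<longleftrightarrow> (\<forall>vs. \<forall>x\<in>S. dderiv f vs differentiable (at x))"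

definition pdir :: "'a \<Rightarrow> ('a::real_normed_vector \<Rightarrow> real) \<Rightarrow> 'a \<Rightarrow> real" where
  "pdir v f x = frechet_derivative f (at x) v"

definition grad3 :: "(real^3 \<Rightarrow> real) \<Rightarrow> real^3 \<Rightarrow> real^3" where
  "grad3 f x = (\<chi> i. frechet_derivative f (at x) (axis i 1))"

definition newton_pot :: "(real^3 \<Rightarrow> real \<Rightarrow> real) \<Rightarrow> real^3 \<Rightarrow> real \<Rightarrow> real" where
  "newton_pot u x t = (1 / (4 * pi)) * (\<integral>y. u y t / dist x y \<partial>lborel)"

definition test_fn :: "(real^3 \<Rightarrow> real) \<Rightarrow> bool" where
  "test_fn \<psi> \<longleftrightarrow> smooth_on UNIV \<psi> \<and> compact (closure {x. \<psi> x \<noteq> 0})"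

definition weak_grad :: "(real^3 \<Rightarrow> real) \<Rightarrow> (real^3 \<Rightarrow> real^3) \<Rightarrow> bool" where
  "weak_grad \<phi> g \<longleftrightarrow>
     (\<forall>K. compact K \<longrightarrow> set_integrable lborel K \<phi> \<and> set_integrable lborel K g) \<and>
     (\<forall>\<psi>. test_fn \<psi> \<longrightarrow> (\<forall>i.
        (\<integral>x. \<phi> x * frechet_derivative \<psi> (at x) (axis i 1) \<partial>lborel)
          = - (\<integral>x. g x $ i * \<psi> x \<partial>lborel)))"

definition solves_PDE :: "(real^3 \<Rightarrow> real \<Rightarrow> real) \<Rightarrow> bool" where
  "solves_PDE u \<longleftrightarrow>
     (let U = (\<lambda>z. u (fst z) (snd z)); A = (\<lambda>z. newton_pot u (fst z) (snd z)) in
      \<forall>x t. t > 0 \<longrightarrow>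
        pdir (0, 1) U (x, t) =
          (\<Sum>i\<in>UNIV. pdir (axis i 1, 0)
              (\<lambda>z. A z * pdir (axis i 1, 0) U z - U z * pdir (axis i 1, 0) A z) (x, t))
      \<and> - (\<Sum>i\<in>UNIV. pdir (axis i 1, 0) (pdir (axis i 1, 0) A) (x, t)) = U (x, t))"

text \<open>The epsilon-Poincare inequality (nonnegative integrals; infinite right-hand side is trivial).\<close>
definition eps_poincare :: "(real^3 \<Rightarrow> real \<Rightarrow> real) \<Rightarrow> bool" where
  "eps_poincare u \<longleftrightarrow>
     (\<forall>\<epsilon>>0. \<exists>C\<epsilon>>0. \<forall>t>0. \<forall>\<phi> g. weak_grad \<phi> g \<longrightarrow>
        (\<integral>\<^sup>+x. ennreal (u x t * (\<phi> x)\<^sup>2) \<partial>lborel)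
          \<le> ennreal \<epsilon> * (\<integral>\<^sup>+x. ennreal (newton_pot u x t * (norm (g x))\<^sup>2) \<partial>lborel)
            + ennreal C\<epsilon> * (\<integral>\<^sup>+x. ennreal ((\<phi> x)\<^sup>2) \<partial>lborel))"

end

theory Submission
  imports Defs
begin

lemma smooth_diff: "smooth_on S f \<Longrightarrow> x \<in> S \<Longrightarrow> f differentiable (at x)"
  unfolding smooth_on_def by (metis dderiv.simps(1))

lemma smooth_deriv_diff: "smooth_on S f \<Longrightarrow> x \<in> S \<Longrightarrow> (\<lambda>y. frechet_derivative f (at y) v) differentiable (at x)"
  unfolding smooth_on_def  apply (drule spec[of _ "[v]"]) by simp

lemma smooth_deriv_cont: "smooth_on S f \<Longrightarrow> continuous_on S (\<lambda>y. frechet_derivative f (at y) v)"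
proof -
  assume "smooth_on S f"
  then have "\<forall>x\<in>S. isCont (\<lambda>y. frechet_derivative f (at y) v) x"
    using smooth_deriv_diff differentiable_imp_continuous_within by blast
  then show ?thesis by (rule continuous_at_imp_continuous_on)
qed

lemma smooth_cont: "smooth_on S f \<Longrightarrow> continuous_on S f"
proof -
  assume "smooth_on S f"
  then have "\<forall>x\<in>S. isCont f x"
    using smooth_diff differentiable_imp_continuous_within by blast
  then show ?thesis by (rule continuous_at_imp_continuous_on)
qed

lemma ibp_zero:
  fixes h :: "'a::euclidean_space \<Rightarrow> real" and e :: 'a
  assumes deriv: "\<And>x. (h has_derivative D x) (at x)"
    and bnd: "\<And>x. \<bar>D x e\<bar> \<le> M"
    and K: "compact K" and supp: "\<And>x. x \<notin> K \<Longrightarrow> h x = 0"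
  shows "integrable lborel (\<lambda>x. D x e) \<and> (\<integral>x. D x e \<partial>lborel) = 0"
proof -
  have cont: "continuous_on UNIV h"
    using deriv has_derivative_continuous continuous_at_imp_continuous_on by blast
  then have hm[measurable]: "h \<in> borel_measurable lborel"
    by (simp add: borel_measurable_continuous_onI)
  have hint: "integrable lborel h"
  proof -
    have "integrable lborel (\<lambda>x. indicator K x *\<^sub>R h x)"
      by (rule borel_integrable_compact[OF K]) (meson cont continuous_on_subset top_greatest)
    moreover have "(\<lambda>x. indicator K x *\<^sub>R h x) = h"
      using supp by (auto simp: indicator_def fun_eq_iff)
    ultimately show ?thesis by simp
  qed
  define t :: "nat \<Rightarrow> real" where "t m = 1 / real (Suc m)" for m
  have tpos: "t m > 0" "t m \<le> 1" for m unfolding t_def by (auto simp: field_simps)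
  define q where "q m x = (h (x + t m *\<^sub>R e) - h x) / t m" for m x
  have qm[measurable]: "q m \<in> borel_measurable lborel" for m
    unfolding q_def by measurable
  define K' where "K' = {x + y | x y. x \<in> K \<and> y \<in> cball 0 (norm e)}"
  have K': "compact K'" unfolding K'_def by (intro compact_sums K compact_cball)
  have Dseg: "DERIV (\<lambda>\<tau>. h (x + \<tau> *\<^sub>R e)) \<tau> :> D (x + \<tau> *\<^sub>R e) e" for x \<tau>
  proof -
    have "((\<lambda>\<tau>. x + \<tau> *\<^sub>R e) has_derivative (\<lambda>s. s *\<^sub>R e)) (at \<tau>)"
      by (auto intro!: derivative_eq_intros)
    from diff_chain_at[OF this deriv]
    have "((\<lambda>\<tau>. h (x + \<tau> *\<^sub>R e)) has_derivative (\<lambda>s. D (x + \<tau> *\<^sub>R e) (s *\<^sub>R e))) (at \<tau>)"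
      by (simp add: o_def)
    moreover have "linear (D (x + \<tau> *\<^sub>R e))" using deriv has_derivative_linear by blast
    ultimately have "((\<lambda>\<tau>. h (x + \<tau> *\<^sub>R e)) has_derivative (\<lambda>s. s * D (x + \<tau> *\<^sub>R e) e)) (at \<tau>)"
      by (simp add: linear_scale)
    then show ?thesis unfolding has_field_derivative_def
      by (rule has_derivative_eq_rhs) (auto simp: fun_eq_iff)
  qed
  have qbound: "\<bar>q m x\<bar> \<le> M * indicator K' x" for m x
  proof (cases "x \<in> K'")
    case True
    obtain z where "0 < z" "z < t m" and eq: "h (x + t m *\<^sub>R e) - h (x + 0 *\<^sub>R e) = (t m - 0) * D (x + z *\<^sub>R e) e"
      using MVT2[of 0 "t m" "\<lambda>\<tau>. h (x + \<tau> *\<^sub>R e)" "\<lambda>\<tau>. D (x + \<tau> *\<^sub>R e) e"] tpos Dseg by blast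
    then have "q m x = D (x + z *\<^sub>R e) e" unfolding q_def using tpos[of m] by simp
    then show ?thesis using True bnd by simp
  next
    case False
    have "x + 0 \<in> K'" if "x \<in> K" unfolding K'_def mem_Collect_eq
      by (rule exI[of _ x], rule exI[of _ 0]) (simp add: that)
    with False have "x \<notin> K" by auto
    moreover have "x + t m *\<^sub>R e \<notin> K"
    proof
      assume a: "x + t m *\<^sub>R e \<in> K"
      have "norm (- (t m *\<^sub>R e)) \<le> norm e" using tpos[of m] by (simp add: mult_left_le_one_le)
      then have n: "- (t m *\<^sub>R e) \<in> cball 0 (norm e)" by (simp add: dist_norm)
      have "(x + t m *\<^sub>R e) + (- (t m *\<^sub>R e)) \<in> K'" unfolding K'_def using a n by blast
      then have "x \<in> K'" by simp
      with False show False by simp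
    qed
    ultimately show ?thesis using False supp by (simp add: q_def)
  qed
  have qlim: "(\<lambda>m. q m x) \<longlonglongrightarrow> D x e" for x
  proof -
    have "((\<lambda>\<tau>. (h (x + \<tau> *\<^sub>R e) - h (x + 0 *\<^sub>R e)) / (\<tau> - 0)) \<longlongrightarrow> D (x + 0 *\<^sub>R e) e) (at 0)"
      using Dseg[of x 0] unfolding has_field_derivative_iff by simp
    then have L: "((\<lambda>\<tau>. (h (x + \<tau> *\<^sub>R e) - h x) / \<tau>) \<longlongrightarrow> D x e) (at 0)" by simp
    have tl: "t \<longlonglongrightarrow> 0" unfolding t_def using LIMSEQ_inverse_real_of_nat
      by (simp add: inverse_eq_divide)
    have tn: "\<forall>n. t n \<noteq> 0"
    proof
      fix n show "t n \<noteq> 0" using tpos(1)[of n] by simp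
    qed
    show ?thesis unfolding q_def
      by (rule LIMSEQ_SEQ_conv[THEN iffD2, OF L, rule_format]) (use tn tl in simp)
  qed
  have Dm[measurable]: "(\<lambda>x. D x e) \<in> borel_measurable lborel"
    by (rule borel_measurable_LIMSEQ_real[OF qlim qm])
  have wint: "integrable lborel (\<lambda>x. M * indicator K' x)"
    using K' by (intro integrable_mult_right) (auto intro!: integrable_real_indicator emeasure_compact_finite borel_compact)
  have "integrable lborel (\<lambda>x. D x e)"
    by (rule integrable_dominated_convergence[where s=q, OF Dm qm wint]) (auto intro!: AE_I2 qlim simp only: real_norm_def qbound)
  moreover have lim: "(\<lambda>m. integral\<^sup>L lborel (q m)) \<longlonglongrightarrow> (\<integral>x. D x e \<partial>lborel)"
    by (rule integral_dominated_convergence[where s=q, OF Dm qm wint]) (auto intro!: AE_I2 qlim simp only: real_norm_def qbound)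
  moreover have zero: "integral\<^sup>L lborel (q m) = 0" for m
  proof -
    have tr: "(\<integral>x. h (x + c) \<partial>lborel) = (\<integral>x. h x \<partial>lborel)" for c
    proof -
      have "(\<integral>x. h x \<partial>lborel) = (\<integral>x. h x \<partial>distr lborel borel ((+) c))"
        by (simp add: lborel_distr_plus)
      also have "\<dots> = (\<integral>x. h (c + x) \<partial>lborel)"
        by (rule integral_distr) auto
      finally show ?thesis by (simp add: add.commute)
    qed
    have i2: "integrable lborel (\<lambda>x. h (x + c))" for c
    proof -
      have "integrable (distr lborel borel ((+) c)) h" using hint by (simp add: lborel_distr_plus)
      then have "integrable lborel (\<lambda>x. h (c + x))"
        by (subst (asm) integrable_distr_eq) auto
      then show ?thesis by (simp add: add.commute)
    qed
    have "integral\<^sup>L lborel (q m) = ((\<integral>x. h (x + t m *\<^sub>R e) \<partial>lborel) - (\<integral>x. h x \<partial>lborel)) / t m"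
      unfolding q_def using i2 hint by (simp add: integral_diff)
    then show ?thesis using tr by simp
  qed
  moreover have "(\<lambda>m. integral\<^sup>L lborel (q m)) \<longlonglongrightarrow> 0" unfolding zero by simp
  ultimately show ?thesis using LIMSEQ_unique[OF lim] by blast
qed

lemma cont_bound:
  fixes f :: "'a::metric_space \<Rightarrow> real"
  assumes "compact K" "continuous_on K f"
  shows "\<exists>M. \<forall>x\<in>K. \<bar>f x\<bar> \<le> M"
proof -
  have "bounded (f ` K)" using assms compact_continuous_image compact_imp_bounded by blast
  then obtain M where "\<forall>y\<in>f ` K. norm y \<le> M" unfolding bounded_iff by blast
  then show ?thesis by auto
qed

lemma test_fn_props:
  assumes "test_fn \<psi>"
  shows "compact (closure {x. \<psi> x \<noteq> 0})"
    and "\<And>x. (\<psi> has_derivative frechet_derivative \<psi> (at x)) (at x)"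
    and "\<And>x. x \<notin> closure {x. \<psi> x \<noteq> 0} \<Longrightarrow> \<psi> x = 0"
    and "\<And>x v. x \<notin> closure {x. \<psi> x \<noteq> 0} \<Longrightarrow> frechet_derivative \<psi> (at x) v = 0"
    and "continuous_on UNIV \<psi>"
    and "\<And>v. continuous_on UNIV (\<lambda>x. frechet_derivative \<psi> (at x) v)"
proof -
  have sm: "smooth_on UNIV \<psi>" using assms unfolding test_fn_def by simp
  show "compact (closure {x. \<psi> x \<noteq> 0})" using assms unfolding test_fn_def by simp
  show d: "(\<psi> has_derivative frechet_derivative \<psi> (at x)) (at x)" for x
    using smooth_diff[OF sm] frechet_derivative_works by blast
  show z: "\<psi> x = 0" if "x \<notin> closure {x. \<psi> x \<noteq> 0}" for x
  proof (rule ccontr)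
    assume "\<psi> x \<noteq> 0"
    then have "x \<in> {x. \<psi> x \<noteq> 0}" by simp
    then have "x \<in> closure {x. \<psi> x \<noteq> 0}" by (rule subsetD[OF closure_subset])
    with that show False by simp
  qed
  show "frechet_derivative \<psi> (at x) v = 0" if "x \<notin> closure {x. \<psi> x \<noteq> 0}" for x v
  proof -
    let ?S = "- closure {x. \<psi> x \<noteq> 0}"
    have "open ?S" "x \<in> ?S" using that by auto
    have "((\<lambda>_. 0::real) has_derivative (\<lambda>_. 0)) (at x)" by simp
    then have "(\<psi> has_derivative (\<lambda>_. 0)) (at x)"
    proof (rule has_derivative_transform_within_open[OF _ \<open>open ?S\<close> \<open>x \<in> ?S\<close>])
      fix y assume "y \<in> ?S"
      then have "y \<notin> closure {x. \<psi> x \<noteq> 0}" by blast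
      from z[OF this] show "0 = \<psi> y" by simp
    qed
    then have "(\<lambda>_. 0) = frechet_derivative \<psi> (at x)" by (rule frechet_derivative_at)
    then show ?thesis by (metis)
  qed
  show "continuous_on UNIV \<psi>" using smooth_cont[OF sm] .
  show "continuous_on UNIV (\<lambda>x. frechet_derivative \<psi> (at x) v)" for v
    using smooth_deriv_cont[OF sm] .
qed

lemma grad3_eq:
  assumes "(\<phi> has_derivative D) (at x)"
  shows "grad3 \<phi> x = (\<chi> i. D (axis i 1))"
  using frechet_derivative_at[OF assms] unfolding grad3_def by simp

lemma vec_meas:
  fixes g :: "'a \<Rightarrow> real^'n"
  assumes "\<And>i. (\<lambda>x. g x $ i) \<in> borel_measurable M"
  shows "g \<in> borel_measurable M"
proof (subst borel_measurable_euclidean_space, intro ballI)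
  fix b :: "real^'n" assume "b \<in> Basis"
  then obtain i where b: "b = axis i 1" unfolding Basis_vec_def by auto
  show "(\<lambda>x. g x \<bullet> b) \<in> borel_measurable M" unfolding b inner_axis
    using assms[of i] by simp
qed

lemma weak_grad_C1:
  fixes \<phi> :: "real^3 \<Rightarrow> real"
  assumes deriv: "\<And>x. (\<phi> has_derivative D x) (at x)"
    and meas: "\<And>i. (\<lambda>x. D x (axis i 1)) \<in> borel_measurable lborel"
    and locbnd: "\<And>K. compact K \<Longrightarrow> \<exists>M. \<forall>x\<in>K. \<forall>i. \<bar>D x (axis i 1)\<bar> \<le> M"
  shows "weak_grad \<phi> (grad3 \<phi>)"
proof -
  have g: "grad3 \<phi> x = (\<chi> i. D x (axis i 1))" for x using grad3_eq[OF deriv] .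
  have cont: "continuous_on UNIV \<phi>"
    using deriv has_derivative_continuous continuous_at_imp_continuous_on by blast
  have gm: "grad3 \<phi> \<in> borel_measurable lborel"
    unfolding g by (rule vec_meas) (use meas in simp)
  have part1: "set_integrable lborel K \<phi> \<and> set_integrable lborel K (grad3 \<phi>)" if K: "compact K" for K
  proof
    show "set_integrable lborel K \<phi>" unfolding set_integrable_def
      by (rule borel_integrable_compact[OF K]) (meson cont continuous_on_subset top_greatest)
    obtain M where M: "\<forall>x\<in>K. \<forall>i. \<bar>D x (axis i 1)\<bar> \<le> M" using locbnd[OF K] by blast
    have A1: "integrable lborel (\<lambda>x. (3 * M) * indicator K x)"
      using K by (intro integrable_mult_right) (auto intro!: integrable_real_indicator emeasure_compact_finite borel_compact)
    have A2: "(\<lambda>x. indicator K x *\<^sub>R grad3 \<phi> x) \<in> borel_measurable lborel"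
      using gm K by (intro borel_measurable_scaleR) (auto intro!: borel_measurable_indicator borel_compact)
    have A3: "norm (indicator K x *\<^sub>R grad3 \<phi> x) \<le> norm ((3 * M) * indicator K x)" for x
    proof (cases "x \<in> K")
      case True
      have "norm (grad3 \<phi> x) \<le> (\<Sum>i\<in>UNIV. \<bar>grad3 \<phi> x $ i\<bar>)" by (rule norm_le_l1_cart)
      also have "\<dots> \<le> (\<Sum>i\<in>(UNIV::3 set). M)"
        by (rule sum_mono) (use M True in \<open>simp add: g\<close>)
      also have "\<dots> = 3 * M" by simp
      finally show ?thesis using True by simp
    qed simp
    show "set_integrable lborel K (grad3 \<phi>)" unfolding set_integrable_def
      by (rule Bochner_Integration.integrable_bound[OF A1 A2 AE_I2[OF A3]])
  qed
  have part2: "(\<integral>x. \<phi> x * frechet_derivative \<psi> (at x) (axis i 1) \<partial>lborel)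
          = - (\<integral>x. grad3 \<phi> x $ i * \<psi> x \<partial>lborel)" if tf: "test_fn \<psi>" for \<psi> i
  proof -
    let ?K = "closure {x. \<psi> x \<noteq> 0}"
    let ?e = "axis i 1 :: real^3"
    note T = test_fn_props[OF tf]
    define Dh where "Dh x v = D x v * \<psi> x + \<phi> x * frechet_derivative \<psi> (at x) v" for x v
    have hd: "((\<lambda>x. \<phi> x * \<psi> x) has_derivative Dh x) (at x)" for x
      unfolding Dh_def using has_derivative_mult[OF deriv T(2)]
      by (simp add: mult.commute add.commute)
    obtain M1 where M1: "\<forall>x\<in>?K. \<forall>i. \<bar>D x (axis i 1)\<bar> \<le> M1" using locbnd[OF T(1)] by blast
    obtain M2 where M2: "\<forall>x\<in>?K. \<bar>\<psi> x\<bar> \<le> M2"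
      using cont_bound[OF T(1) continuous_on_subset[OF T(5) subset_UNIV]] by blast
    obtain M3 where M3: "\<forall>x\<in>?K. \<bar>\<phi> x\<bar> \<le> M3"
      using cont_bound[OF T(1) continuous_on_subset[OF cont subset_UNIV]] by blast
    obtain M4 where M4: "\<forall>x\<in>?K. \<bar>frechet_derivative \<psi> (at x) ?e\<bar> \<le> M4"
      using cont_bound[OF T(1) continuous_on_subset[OF T(6) subset_UNIV]] by blast
    have M1': "\<bar>D x ?e\<bar> \<le> M1" if "x \<in> ?K" for x using M1 that by blast
    have bnd: "\<bar>Dh x ?e\<bar> \<le> max M1 0 * max M2 0 + max M3 0 * max M4 0" for x
    proof (cases "x \<in> ?K")
      case True
      have "\<bar>Dh x ?e\<bar> \<le> \<bar>D x ?e\<bar> * \<bar>\<psi> x\<bar> + \<bar>\<phi> x\<bar> * \<bar>frechet_derivative \<psi> (at x) ?e\<bar>"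
        unfolding Dh_def using abs_triangle_ineq[of "D x ?e * \<psi> x" "\<phi> x * frechet_derivative \<psi> (at x) ?e"] by (simp add: abs_mult)
      also have "\<dots> \<le> max M1 0 * max M2 0 + max M3 0 * max M4 0"
      proof -
        have a: "\<bar>D x ?e\<bar> \<le> max M1 0" using M1'[OF True] by linarith
        have b: "\<bar>\<psi> x\<bar> \<le> max M2 0" using M2 True by (meson max.coboundedI1)
        have c: "\<bar>\<phi> x\<bar> \<le> max M3 0" using M3 True by (meson max.coboundedI1)
        have d: "\<bar>frechet_derivative \<psi> (at x) ?e\<bar> \<le> max M4 0" using M4 True by (meson max.coboundedI1)
        show ?thesis by (intro add_mono mult_mono a b c d) simp_all
      qed
      finally show ?thesis .
    next
      case False
      then have "Dh x ?e = 0" unfolding Dh_def using T(3)[OF False] T(4)[OF False] by simp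
      moreover have "0 \<le> max M1 0 * max M2 0 + max M3 0 * max M4 0" by simp
      ultimately show ?thesis by simp
    qed
    have supp: "\<phi> x * \<psi> x = 0" if "x \<notin> ?K" for x using T(3)[OF that] by simp
    from ibp_zero[OF hd bnd T(1) supp]
    have I: "integrable lborel (\<lambda>x. Dh x ?e)" "(\<integral>x. Dh x ?e \<partial>lborel) = 0" by auto
    have KI: "integrable lborel (\<lambda>x. B * indicator ?K x)" for B :: real
      using T(1) by (intro integrable_mult_right) (auto intro!: integrable_real_indicator emeasure_compact_finite borel_compact)
    have psim: "\<psi> \<in> borel_measurable lborel"
      using T(5) by (simp add: borel_measurable_continuous_onI)
    have dpsim: "(\<lambda>x. frechet_derivative \<psi> (at x) ?e) \<in> borel_measurable lborel"
      using T(6) by (simp add: borel_measurable_continuous_onI)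
    have phim: "\<phi> \<in> borel_measurable lborel"
      using cont by (simp add: borel_measurable_continuous_onI)
    have Dm: "(\<lambda>x. D x ?e) \<in> borel_measurable lborel" using meas[of i] .
    have i1: "integrable lborel (\<lambda>x. D x ?e * \<psi> x)"
    proof (rule Bochner_Integration.integrable_bound[OF KI[of "max M1 0 * max M2 0"]])
      show "(\<lambda>x. D x ?e * \<psi> x) \<in> borel_measurable lborel" using Dm psim by measurable
      show "AE x in lborel. norm (D x ?e * \<psi> x) \<le> norm (max M1 0 * max M2 0 * indicator ?K x)"
      proof (intro AE_I2)
        fix x show "norm (D x ?e * \<psi> x) \<le> norm (max M1 0 * max M2 0 * indicator ?K x)"
        proof (cases "x \<in> ?K")
          case True
          have a: "\<bar>D x ?e\<bar> \<le> max M1 0" using M1 True by (meson max.coboundedI1)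
          have b: "\<bar>\<psi> x\<bar> \<le> max M2 0" using M2 True by (meson max.coboundedI1)
          have "\<bar>D x ?e\<bar> * \<bar>\<psi> x\<bar> \<le> max M1 0 * max M2 0" by (intro mult_mono a b) simp_all
          then show ?thesis using True by (simp add: abs_mult)
        next
          case False then show ?thesis using T(3)[OF False] by simp
        qed
      qed
    qed
    have i2: "integrable lborel (\<lambda>x. \<phi> x * frechet_derivative \<psi> (at x) ?e)"
    proof (rule Bochner_Integration.integrable_bound[OF KI[of "max M3 0 * max M4 0"]])
      show "(\<lambda>x. \<phi> x * frechet_derivative \<psi> (at x) ?e) \<in> borel_measurable lborel" using phim dpsim by measurable
      show "AE x in lborel. norm (\<phi> x * frechet_derivative \<psi> (at x) ?e) \<le> norm (max M3 0 * max M4 0 * indicator ?K x)"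
      proof (intro AE_I2)
        fix x show "norm (\<phi> x * frechet_derivative \<psi> (at x) ?e) \<le> norm (max M3 0 * max M4 0 * indicator ?K x)"
        proof (cases "x \<in> ?K")
          case True
          have a: "\<bar>\<phi> x\<bar> \<le> max M3 0" using M3 True by (meson max.coboundedI1)
          have b: "\<bar>frechet_derivative \<psi> (at x) ?e\<bar> \<le> max M4 0" using M4 True by (meson max.coboundedI1)
          have "\<bar>\<phi> x\<bar> * \<bar>frechet_derivative \<psi> (at x) ?e\<bar> \<le> max M3 0 * max M4 0" by (intro mult_mono a b) simp_all
          then show ?thesis using True by (simp add: abs_mult)
        next
          case False then show ?thesis using T(4)[OF False] by simp
        qed
      qed
    qed
    have "(\<integral>x. D x ?e * \<psi> x \<partial>lborel) + (\<integral>x. \<phi> x * frechet_derivative \<psi> (at x) ?e \<partial>lborel) = 0"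
      using I(2) unfolding Dh_def by (simp add: Bochner_Integration.integral_add[OF i1 i2])
    then show ?thesis by (simp add: g)
  qed
  show ?thesis unfolding weak_grad_def using part1 part2 by blast
qed

definition Gf :: "real \<Rightarrow> real \<Rightarrow> real \<Rightarrow> real" where
  "Gf q d r = max r 0 powr (q + 1) / (max r 0 + d)"

definition Gd :: "real \<Rightarrow> real \<Rightarrow> real \<Rightarrow> real" where
  "Gd q d r = max r 0 powr q * (q * max r 0 + (q + 1) * d) / (max r 0 + d)\<^sup>2"

lemma Gf_nonpos: "r \<le> 0 \<Longrightarrow> Gf q d r = 0" "r \<le> 0 \<Longrightarrow> Gd q d r = 0"
  unfolding Gf_def Gd_def by simp_all

lemma Gd_cont:
  assumes q: "q > 0" and d: "d > 0"
  shows "continuous_on UNIV (Gd q d)"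
proof -
  have c1: "continuous_on UNIV (\<lambda>r. max r 0 powr q)"
    by (rule continuous_on_powr') (use q in \<open>auto intro!: continuous_intros\<close>)
  have c2: "continuous_on UNIV (\<lambda>r. q * max r 0 + (q + 1) * d)" by (intro continuous_intros)
  have c3: "continuous_on UNIV (\<lambda>r. (max r 0 + d)\<^sup>2)" by (intro continuous_intros)
  have nz: "\<forall>r\<in>UNIV. (max r 0 + d)\<^sup>2 \<noteq> 0" using d
    by (metis add_nonneg_pos max.cobounded2 power_not_zero rel_simps(70))
  show ?thesis unfolding Gd_def
    using continuous_on_divide[OF continuous_on_mult[OF c1 c2] c3 nz] by simp
qed

lemma Gf_deriv:
  assumes q: "q > 0" and d: "d > 0"
  shows "(Gf q d has_real_derivative Gd q d r) (at r)"
proof -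
  consider "r < 0" | "r = 0" | "r > 0" by linarith
  then show ?thesis
  proof cases
    case 1
    have "((\<lambda>_. 0) has_real_derivative 0) (at r)" by simp
    then have "(Gf q d has_real_derivative 0) (at r)"
    proof (rule has_field_derivative_transform_within_open[where S="{..<0}"])
      show "r \<in> {..<0}" using 1 by simp
    qed (auto simp: Gf_def)
    then show ?thesis using 1 by (simp add: Gf_nonpos)
  next
    case 3
    have "((\<lambda>r. r powr (q + 1) / (r + d)) has_real_derivative
            ((q + 1) * r powr (q + 1 - 1) * (r + d) - r powr (q + 1) * 1) / ((r + d) * (r + d))) (at r)"
      using 3 d by (intro DERIV_divide has_real_derivative_powr derivative_eq_intros) auto
    moreover have "((q + 1) * r powr (q + 1 - 1) * (r + d) - r powr (q + 1) * 1) / ((r + d) * (r + d))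
        = Gd q d r"
    proof -
      have "r powr (q + 1) = r powr q * r" using 3 by (simp add: powr_add)
      then show ?thesis using 3 unfolding Gd_def by (simp add: power2_eq_square algebra_simps)
    qed
    ultimately have "((\<lambda>r. r powr (q + 1) / (r + d)) has_real_derivative Gd q d r) (at r)" by simp
    then show ?thesis
    proof (rule has_field_derivative_transform_within_open[where S="{0<..}"])
      show "r \<in> {0<..}" using 3 by simp
    qed (auto simp: Gf_def)
  next
    case 2
    have "((\<lambda>y. (Gf q d y - Gf q d 0) / (y - 0)) \<longlongrightarrow> 0) (at 0)"
    proof (rule Lim_null_comparison)
      show "((\<lambda>y. max y 0 powr q / d) \<longlongrightarrow> 0) (at 0)"
      proof -
        have "((\<lambda>y. max y 0 powr q / d) \<longlongrightarrow> max 0 0 powr q / d) (at 0)"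
          by (intro tendsto_intros tendsto_powr') (use q d in \<open>auto intro!: tendsto_eq_intros\<close>)
        then show ?thesis by simp
      qed
      show "\<forall>\<^sub>F y in at 0. norm ((Gf q d y - Gf q d 0) / (y - 0)) \<le> max y 0 powr q / d"
      proof (intro always_eventually allI)
        fix y :: real
        show "norm ((Gf q d y - Gf q d 0) / (y - 0)) \<le> max y 0 powr q / d"
        proof (cases "y > 0")
          case False then show ?thesis by (simp add: Gf_nonpos)
        next
          case True
          have "Gf q d y = y powr q * y / (y + d)" using True unfolding Gf_def
            by (simp add: powr_add)
          then have "norm ((Gf q d y - Gf q d 0) / (y - 0)) = y powr q / (y + d)"
            using True d by (simp add: Gf_nonpos abs_mult)
          also have "\<dots> \<le> y powr q / d" using True d
            by (intro divide_left_mono) auto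
          finally show ?thesis using True by simp
        qed
      qed
    qed
    then show ?thesis using 2 unfolding has_field_derivative_iff by (simp add: Gf_nonpos)
  qed
qed

lemma Gf_cont: "q > 0 \<Longrightarrow> d > 0 \<Longrightarrow> continuous_on UNIV (Gf q d)"
  by (intro continuous_at_imp_continuous_on ballI DERIV_isCont[OF Gf_deriv])

lemma Gf_ge0: "d > 0 \<Longrightarrow> 0 \<le> Gf q d r"
  unfolding Gf_def by (simp add: add_nonneg_pos)

lemma Gf_le: "d > 0 \<Longrightarrow> Gf q d r \<le> max r 0 powr q"
proof (cases "r > 0")
  case True
  assume d: "d > 0"
  have "Gf q d r = r powr q * (r / (r + d))" using True unfolding Gf_def by (simp add: powr_add)
  also have "\<dots> \<le> r powr q * 1" using True d by (intro mult_left_mono) auto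
  finally show ?thesis using True by simp
qed (simp add: Gf_def)

lemma Gd_ge0: "q > 0 \<Longrightarrow> d > 0 \<Longrightarrow> 0 \<le> Gd q d r"
  unfolding Gd_def by (intro divide_nonneg_nonneg mult_nonneg_nonneg add_nonneg_nonneg) auto

lemma Gd_le:
  assumes q: "q > 0" and d: "d > 0" and r: "r > 0"
  shows "Gd q d r \<le> (q + 1) * r powr (q - 1)"
proof -
  have rq: "r powr q = r powr (q - 1) * r" using r by (simp add: powr_diff)
  have key: "r * (q * r + (q + 1) * d) \<le> (q + 1) * (r + d)\<^sup>2"
  proof -
    have "(q + 1) * (r + d)\<^sup>2 - r * (q * r + (q + 1) * d) = r\<^sup>2 + (q + 1) * r * d + (q + 1) * d\<^sup>2"
      by (simp add: power2_eq_square algebra_simps)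
    also have "\<dots> \<ge> 0" using q d r by (intro add_nonneg_nonneg mult_nonneg_nonneg) auto
    finally show ?thesis by simp
  qed
  have pos: "(r + d)\<^sup>2 > 0" using r d by simp
  have "Gd q d r = r powr (q - 1) * (r * (q * r + (q + 1) * d)) / (r + d)\<^sup>2"
    unfolding Gd_def using r by (simp add: rq mult.assoc)
  also have "\<dots> \<le> r powr (q - 1) * ((q + 1) * (r + d)\<^sup>2) / (r + d)\<^sup>2"
    by (intro divide_right_mono mult_left_mono key) auto
  also have "\<dots> = (q + 1) * r powr (q - 1)" using pos by simp
  finally show ?thesis .
qed

lemma Gf_mono: "0 < d2 \<Longrightarrow> d2 \<le> d1 \<Longrightarrow> Gf q d1 r \<le> Gf q d2 r"
  unfolding Gf_def by (intro divide_left_mono) (auto intro!: mult_pos_pos add_nonneg_pos)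

lemma dn_lim: "(\<lambda>n. 1 / real (Suc n)) \<longlonglongrightarrow> 0"
  using LIMSEQ_inverse_real_of_nat by (simp add: inverse_eq_divide)

lemma Gf_lim: "(\<lambda>n. Gf q (1 / real (Suc n)) r) \<longlonglongrightarrow> max r 0 powr q"
proof (cases "r > 0")
  case True
  have "(\<lambda>n. r powr (q + 1) / (r + 1 / real (Suc n))) \<longlonglongrightarrow> r powr (q + 1) / (r + 0)"
    using True by (intro tendsto_divide tendsto_const tendsto_add dn_lim) auto
  moreover have "r powr (q + 1) / (r + 0) = r powr q" using True by (simp add: powr_add)
  ultimately show ?thesis using True unfolding Gf_def by simp
qed (simp add: Gf_def)

lemma Gd_lim:
  assumes q: "q > 0"
  shows "(\<lambda>n. Gd q (1 / real (Suc n)) r) \<longlonglongrightarrow> (if r > 0 then q * r powr (q - 1) else 0)"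
proof (cases "r > 0")
  case True
  have "(\<lambda>n. r powr q * (q * r + (q + 1) * (1 / real (Suc n))) / (r + 1 / real (Suc n))\<^sup>2)
      \<longlonglongrightarrow> r powr q * (q * r + (q + 1) * 0) / (r + 0)\<^sup>2"
    using True by (intro tendsto_divide tendsto_mult tendsto_const tendsto_add tendsto_power dn_lim) auto
  moreover have "r powr q * (q * r + (q + 1) * 0) / (r + 0)\<^sup>2 = q * r powr (q - 1)"
    using True by (simp add: powr_diff power2_eq_square)
  ultimately show ?thesis using True unfolding Gd_def by simp
qed (simp add: Gd_def)

definition dvec :: "(real^3 \<Rightarrow> real^3 \<Rightarrow> real) \<Rightarrow> real^3 \<Rightarrow> real^3" where
  "dvec D x = (\<chi> i. D x (axis i 1))"

lemma comp_deriv: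
  fixes U :: "'a::real_normed_vector \<Rightarrow> real"
  assumes Ud: "(U has_derivative DU) (at x)" and G: "(G has_real_derivative G') (at (U x - k))"
  shows "((\<lambda>x. G (U x - k)) has_derivative (\<lambda>v. G' * DU v)) (at x)"
proof -
  have "((\<lambda>x. U x - k) has_derivative (\<lambda>v. DU v - 0)) (at x)"
    using has_derivative_diff[OF Ud has_derivative_const] .
  from diff_chain_at[OF this G[unfolded has_field_derivative_def]]
  show ?thesis by (simp add: o_def)
qed

lemma phi_deriv:
  fixes U \<eta> :: "'a::real_normed_vector \<Rightarrow> real"
  assumes Ud: "(U has_derivative DU) (at x)" and \<eta>d: "(\<eta> has_derivative D\<eta>) (at x)"
    and G: "(G has_real_derivative G') (at (U x - k))"
  shows "((\<lambda>x. \<eta> x * G (U x - k)) has_derivative (\<lambda>v. D\<eta> v * G (U x - k) + \<eta> x * (G' * DU v))) (at x)"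
  using has_derivative_mult[OF \<eta>d comp_deriv[OF Ud G]] by (simp add: algebra_simps)

lemma phi_n_facts:
  fixes U \<eta> :: "real^3 \<Rightarrow> real"
  assumes q: "q > 0" and d: "d > 0"
    and Ud: "\<And>x. (U has_derivative DU x) (at x)" and Uc: "\<And>v. continuous_on UNIV (\<lambda>x. DU x v)"
    and \<eta>d: "\<And>x. (\<eta> has_derivative D\<eta> x) (at x)" and \<eta>c: "\<And>v. continuous_on UNIV (\<lambda>x. D\<eta> x v)"
  shows "weak_grad (\<lambda>x. \<eta> x * Gf q d (U x - k)) (grad3 (\<lambda>x. \<eta> x * Gf q d (U x - k)))"
    and "grad3 (\<lambda>x. \<eta> x * Gf q d (U x - k)) x
           = Gf q d (U x - k) *\<^sub>R dvec D\<eta> x + (\<eta> x * Gd q d (U x - k)) *\<^sub>R dvec DU x"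
proof -
  define D where "D x v = D\<eta> x v * Gf q d (U x - k) + \<eta> x * (Gd q d (U x - k) * DU x v)" for x v
  have deriv: "((\<lambda>x. \<eta> x * Gf q d (U x - k)) has_derivative D x) (at x)" for x
    unfolding D_def by (rule phi_deriv[OF Ud \<eta>d Gf_deriv[OF q d]])
  have Ucont: "continuous_on UNIV U"
    using Ud has_derivative_continuous continuous_at_imp_continuous_on by blast
  have \<eta>cont: "continuous_on UNIV \<eta>"
    using \<eta>d has_derivative_continuous continuous_at_imp_continuous_on by blast
  have Uk: "continuous_on UNIV (\<lambda>x. U x - k)" using Ucont by (intro continuous_intros)
  have c1: "continuous_on UNIV (\<lambda>x. Gf q d (U x - k))"
    using continuous_on_compose2[OF Gf_cont[OF q d] Uk] by simp
  have c2: "continuous_on UNIV (\<lambda>x. Gd q d (U x - k))"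
    using continuous_on_compose2[OF Gd_cont[OF q d] Uk] by simp
  have Dc: "continuous_on UNIV (\<lambda>x. D x v)" for v
    unfolding D_def by (intro continuous_on_add continuous_on_mult \<eta>c Uc c1 c2 \<eta>cont)
  show "weak_grad (\<lambda>x. \<eta> x * Gf q d (U x - k)) (grad3 (\<lambda>x. \<eta> x * Gf q d (U x - k)))"
  proof (rule weak_grad_C1[OF deriv])
    show "(\<lambda>x. D x (axis i 1)) \<in> borel_measurable lborel" for i
      using Dc by (simp add: borel_measurable_continuous_onI)
    show "\<exists>M. \<forall>x\<in>K. \<forall>i. \<bar>D x (axis i 1)\<bar> \<le> M" if K: "compact K" for K
    proof -
      have "\<exists>M. \<forall>x\<in>K. \<bar>D x (axis i 1)\<bar> \<le> M" for i
        by (rule cont_bound[OF K continuous_on_subset[OF Dc subset_UNIV]])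
      then obtain M where M: "\<forall>x\<in>K. \<bar>D x (axis i 1)\<bar> \<le> M i" for i by metis
      have "\<forall>x\<in>K. \<forall>i. \<bar>D x (axis i 1)\<bar> \<le> (\<Sum>j\<in>UNIV. \<bar>M j\<bar>)"
      proof (intro ballI allI)
        fix x i assume "x \<in> K"
        then have "\<bar>D x (axis i 1)\<bar> \<le> \<bar>M i\<bar>" using M by (meson abs_ge_self order_trans)
        also have "\<dots> \<le> (\<Sum>j\<in>UNIV. \<bar>M j\<bar>)"
          by (rule member_le_sum) auto
        finally show "\<bar>D x (axis i 1)\<bar> \<le> (\<Sum>j\<in>UNIV. \<bar>M j\<bar>)" .
      qed
      then show ?thesis by blast
    qed
  qed
  show "grad3 (\<lambda>x. \<eta> x * Gf q d (U x - k)) x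
           = Gf q d (U x - k) *\<^sub>R dvec D\<eta> x + (\<eta> x * Gd q d (U x - k)) *\<^sub>R dvec DU x"
    unfolding grad3_eq[OF deriv] dvec_def D_def by (simp add: vec_eq_iff algebra_simps)
qed

definition ghat :: "real \<Rightarrow> real \<Rightarrow> (real^3 \<Rightarrow> real) \<Rightarrow> (real^3 \<Rightarrow> real^3 \<Rightarrow> real)
    \<Rightarrow> (real^3 \<Rightarrow> real) \<Rightarrow> (real^3 \<Rightarrow> real^3 \<Rightarrow> real) \<Rightarrow> real^3 \<Rightarrow> real^3" where
  "ghat q k U DU \<eta> D\<eta> x = (max (U x - k) 0 powr q) *\<^sub>R dvec D\<eta> x
      + (\<eta> x * (q * (if U x > k then (U x - k) powr (q - 1) else 0))) *\<^sub>R dvec DU x"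

lemma eta_zero_deriv:
  fixes \<eta> :: "'a::real_normed_vector \<Rightarrow> real"
  assumes nn: "\<And>y. \<eta> y \<ge> 0" and d: "(\<eta> has_derivative D) (at x)" and z: "\<eta> x = 0"
  shows "D v = 0"
proof -
  have "D = (\<lambda>v. 0)"
    by (rule differential_zero_maxmin[of x UNIV, OF _ _ d]) (use nn z in auto)
  then show ?thesis by simp
qed

lemma ghat_eta0:
  assumes nn: "\<And>y. \<eta> y \<ge> 0" and d: "(\<eta> has_derivative D\<eta> x) (at x)" and z: "\<eta> x = 0"
  shows "ghat q k U DU \<eta> D\<eta> x = 0"
proof -
  have "dvec D\<eta> x = 0" unfolding dvec_def
    using eta_zero_deriv[OF nn d z] by (simp add: vec_eq_iff)
  then show ?thesis unfolding ghat_def using z by simp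
qed

lemma ghat_le_grad:
  fixes U \<eta> :: "real^3 \<Rightarrow> real"
  assumes q: "q > 0" and A: "a \<ge> 0"
    and Ud: "\<And>x. (U has_derivative DU x) (at x)"
    and \<eta>d: "\<And>x. (\<eta> has_derivative D\<eta> x) (at x)"
  shows "a * (norm (ghat q k U DU \<eta> D\<eta> x))\<^sup>2
     \<le> a * (norm (grad3 (\<lambda>y. \<eta> y * max (U y - k) 0 powr q) x))\<^sup>2"
proof (cases "U x > k")
  case False
  then have "ghat q k U DU \<eta> D\<eta> x = 0" unfolding ghat_def by simp
  then show ?thesis using A by simp
next
  case True
  have Ucont: "continuous_on UNIV U"
    using Ud has_derivative_continuous continuous_at_imp_continuous_on by blast
  have op: "open {y. k < U y}" by (rule open_Collect_less) (use Ucont in auto)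
  have G: "((\<lambda>r. r powr q) has_real_derivative q * (U x - k) powr (q - 1)) (at (U x - k))"
    using True by (intro has_real_derivative_powr) simp
  have d1: "((\<lambda>y. \<eta> y * (U y - k) powr q) has_derivative
     (\<lambda>v. D\<eta> x v * (U x - k) powr q + \<eta> x * (q * (U x - k) powr (q - 1) * DU x v))) (at x)"
    by (rule phi_deriv[OF Ud \<eta>d G])
  have d2: "((\<lambda>y. \<eta> y * max (U y - k) 0 powr q) has_derivative
     (\<lambda>v. D\<eta> x v * (U x - k) powr q + \<eta> x * (q * (U x - k) powr (q - 1) * DU x v))) (at x)"
  proof (rule has_derivative_transform_within_open[OF d1 op])
    show "x \<in> {y. k < U y}" using True by simp
    fix y assume "y \<in> {y. k < U y}"
    then show "\<eta> y * (U y - k) powr q = \<eta> y * max (U y - k) 0 powr q" by simp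
  qed
  have "grad3 (\<lambda>y. \<eta> y * max (U y - k) 0 powr q) x = ghat q k U DU \<eta> D\<eta> x"
    unfolding grad3_eq[OF d2] ghat_def dvec_def using True
    by (simp add: vec_eq_iff algebra_simps)
  then show ?thesis by simp
qed

lemma sq_sum_le: "(a + b)\<^sup>2 \<le> 2 * a\<^sup>2 + 2 * b\<^sup>2" for a b :: real
proof -
  have "0 \<le> (a - b)\<^sup>2" by simp
  then show ?thesis by (simp add: power2_eq_square algebra_simps)
qed

lemma alg_id: "A * (2 * (a * b)\<^sup>2 + 2 * (c * d)\<^sup>2) = 2 * a\<^sup>2 * A * b\<^sup>2 + 2 * c\<^sup>2 * (A * d\<^sup>2)" for A a b c d :: real
  by (simp add: power2_eq_square algebra_simps)

lemma norm_dvec_sq: "(norm (dvec D x))\<^sup>2 = (\<Sum>i\<in>UNIV. (D x (axis i 1))\<^sup>2)"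
  unfolding power2_norm_eq_inner inner_vec_def dvec_def by (simp add: power2_eq_square)

lemma time_slice:
  fixes U A \<eta> :: "real^3 \<Rightarrow> real"
  assumes q: "q > 0" and eps: "\<epsilon> > 0" and Cp: "C \<ge> 0"
    and Ud: "\<And>x. (U has_derivative DU x) (at x)" and Uc: "\<And>v. continuous_on UNIV (\<lambda>x. DU x v)"
    and \<eta>d: "\<And>x. (\<eta> has_derivative D\<eta> x) (at x)" and \<eta>c: "\<And>v. continuous_on UNIV (\<lambda>x. D\<eta> x v)"
    and \<eta>nn: "\<And>x. \<eta> x \<ge> 0" and supp: "{x. \<eta> x \<noteq> 0} \<subseteq> ball x0 R"
    and Unn: "\<And>x. U x \<ge> 0" and Ac: "continuous_on UNIV A" and Ann: "\<And>x. A x \<ge> 0"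
    and P: "\<And>\<phi> g. weak_grad \<phi> g \<Longrightarrow>
        (\<integral>\<^sup>+x. ennreal (U x * (\<phi> x)\<^sup>2) \<partial>lborel)
          \<le> ennreal \<epsilon> * (\<integral>\<^sup>+x. ennreal (A x * (norm (g x))\<^sup>2) \<partial>lborel)
            + ennreal C * (\<integral>\<^sup>+x. ennreal ((\<phi> x)\<^sup>2) \<partial>lborel)"
  shows "(\<integral>\<^sup>+x. ennreal ((\<eta> x)\<^sup>2 * U x * (max (U x - k) 0 powr q)\<^sup>2) \<partial>lborel)
     \<le> ennreal \<epsilon> * (\<integral>\<^sup>+x. ennreal (A x * (norm (ghat q k U DU \<eta> D\<eta> x))\<^sup>2) \<partial>lborel)
       + ennreal C * (\<integral>\<^sup>+x. ennreal ((\<eta> x)\<^sup>2 * (max (U x - k) 0 powr q)\<^sup>2) \<partial>lborel)"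
    (is "?LHS \<le> ennreal \<epsilon> * ?XL + ennreal C * ?Y")
proof -
  define \<delta> :: "nat \<Rightarrow> real" where "\<delta> n = 1 / real (Suc n)" for n
  have \<delta>pos: "\<delta> n > 0" for n unfolding \<delta>_def by simp
  have \<delta>mono: "m \<le> n \<Longrightarrow> \<delta> n \<le> \<delta> m" for m n unfolding \<delta>_def by (simp add: frac_le)
  define F where "F x = max (U x - k) 0 powr q" for x
  define \<phi> where "\<phi> n x = \<eta> x * Gf q (\<delta> n) (U x - k)" for n x
  define gn where "gn n x = Gf q (\<delta> n) (U x - k) *\<^sub>R dvec D\<eta> x + (\<eta> x * Gd q (\<delta> n) (U x - k)) *\<^sub>R dvec DU x" for n x
  define gh where "gh = ghat q k U DU \<eta> D\<eta>"
  define Pf where "Pf x = (if U x > k then (U x - k) powr (q - 1) else 0)" for x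
  have gh_eq: "gh x = F x *\<^sub>R dvec D\<eta> x + (\<eta> x * (q * Pf x)) *\<^sub>R dvec DU x" for x
    unfolding gh_def ghat_def F_def Pf_def by simp
  have Ucont: "continuous_on UNIV U"
    using Ud has_derivative_continuous continuous_at_imp_continuous_on by blast
  have \<eta>cont: "continuous_on UNIV \<eta>"
    using \<eta>d has_derivative_continuous continuous_at_imp_continuous_on by blast
  have Uk: "continuous_on UNIV (\<lambda>x. U x - k)" using Ucont by (intro continuous_intros)
  have Um[measurable]: "U \<in> borel_measurable borel" using Ucont by (simp add: borel_measurable_continuous_onI)
  have \<eta>m[measurable]: "\<eta> \<in> borel_measurable borel" using \<eta>cont by (simp add: borel_measurable_continuous_onI)
  have Am[measurable]: "A \<in> borel_measurable borel" using Ac by (simp add: borel_measurable_continuous_onI)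
  have dvm1[measurable]: "dvec D\<eta> \<in> borel_measurable borel"
    unfolding dvec_def by (rule vec_meas) (use \<eta>c in \<open>simp add: borel_measurable_continuous_onI\<close>)
  have dvm2[measurable]: "dvec DU \<in> borel_measurable borel"
    unfolding dvec_def by (rule vec_meas) (use Uc in \<open>simp add: borel_measurable_continuous_onI\<close>)
  have Gfm[measurable]: "(\<lambda>x. Gf q d (U x - k)) \<in> borel_measurable borel" if "d > 0" for d
    using continuous_on_compose2[OF Gf_cont[OF q that] Uk]
    by (simp add: borel_measurable_continuous_onI)
  have Gdm[measurable]: "(\<lambda>x. Gd q d (U x - k)) \<in> borel_measurable borel" if "d > 0" for d
    using continuous_on_compose2[OF Gd_cont[OF q that] Uk]
    by (simp add: borel_measurable_continuous_onI)
  have Fm[measurable]: "F \<in> borel_measurable borel" unfolding F_def by measurable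
  have Pfm[measurable]: "Pf \<in> borel_measurable borel" unfolding Pf_def by measurable
  have ghm[measurable]: "gh \<in> borel_measurable borel"
    unfolding gh_eq[abs_def] by measurable
  have gnm[measurable]: "gn n \<in> borel_measurable borel" for n
    unfolding gn_def[abs_def] using Gfm[OF \<delta>pos] Gdm[OF \<delta>pos] by measurable
  have \<phi>m[measurable]: "\<phi> n \<in> borel_measurable borel" for n
    unfolding \<phi>_def[abs_def] using Gfm[OF \<delta>pos] by measurable
  have Pn: "(\<integral>\<^sup>+x. ennreal (U x * (\<phi> n x)\<^sup>2) \<partial>lborel)
      \<le> ennreal \<epsilon> * (\<integral>\<^sup>+x. ennreal (A x * (norm (gn n x))\<^sup>2) \<partial>lborel)
        + ennreal C * (\<integral>\<^sup>+x. ennreal ((\<phi> n x)\<^sup>2) \<partial>lborel)" for n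
  proof -
    note facts = phi_n_facts[OF q \<delta>pos[of n] Ud Uc \<eta>d \<eta>c, of k]
    have e: "grad3 (\<phi> n) = gn n" unfolding \<phi>_def gn_def using facts(2) by (simp add: fun_eq_iff)
    have "weak_grad (\<phi> n) (grad3 (\<phi> n))" unfolding \<phi>_def using facts(1) by simp
    then have "weak_grad (\<phi> n) (gn n)" unfolding e .
    then show ?thesis by (rule P)
  qed
  have Gf_leF: "0 \<le> Gf q (\<delta> n) (U x - k) \<and> Gf q (\<delta> n) (U x - k) \<le> F x" for n x
    unfolding F_def using Gf_ge0[OF \<delta>pos] Gf_le[OF \<delta>pos] by simp
  have Fnn: "F x \<ge> 0" for x unfolding F_def by simp
  have stepa: "(\<lambda>n. \<integral>\<^sup>+x. ennreal (U x * (\<phi> n x)\<^sup>2) \<partial>lborel) \<longlonglongrightarrow> ?LHS"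
  proof (rule nn_integral_LIMSEQ)
    show "incseq (\<lambda>n x. ennreal (U x * (\<phi> n x)\<^sup>2))"
    proof (intro incseq_SucI le_funI ennreal_leI)
      fix n x
      have "Gf q (\<delta> n) (U x - k) \<le> Gf q (\<delta> (Suc n)) (U x - k)"
        by (rule Gf_mono[OF \<delta>pos \<delta>mono]) simp
      then have "(\<phi> n x)\<^sup>2 \<le> (\<phi> (Suc n) x)\<^sup>2" unfolding \<phi>_def using Gf_leF[of n x] \<eta>nn[of x]
        by (intro power_mono mult_left_mono) auto
      then show "U x * (\<phi> n x)\<^sup>2 \<le> U x * (\<phi> (Suc n) x)\<^sup>2" using Unn[of x] by (rule mult_left_mono)
    qed
    show "\<And>n. (\<lambda>x. ennreal (U x * (\<phi> n x)\<^sup>2)) \<in> borel_measurable lborel" by measurable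
    fix x
    have "(\<lambda>n. Gf q (\<delta> n) (U x - k)) \<longlonglongrightarrow> F x" unfolding \<delta>_def F_def by (rule Gf_lim)
    then have "(\<lambda>n. U x * (\<phi> n x)\<^sup>2) \<longlonglongrightarrow> U x * (\<eta> x * F x)\<^sup>2"
      unfolding \<phi>_def by (intro tendsto_mult tendsto_power tendsto_const)
    then show "(\<lambda>n. ennreal (U x * (\<phi> n x)\<^sup>2)) \<longlonglongrightarrow> ennreal ((\<eta> x)\<^sup>2 * U x * (max (U x - k) 0 powr q)\<^sup>2)"
      unfolding F_def by (intro tendsto_ennrealI) (simp add: power_mult_distrib algebra_simps)
  qed
  have stepb: "(\<integral>\<^sup>+x. ennreal ((\<phi> n x)\<^sup>2) \<partial>lborel) \<le> ?Y" for n
  proof (rule nn_integral_mono)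
    fix x
    have "(\<phi> n x)\<^sup>2 \<le> (\<eta> x * F x)\<^sup>2" unfolding \<phi>_def using Gf_leF[of n x] \<eta>nn[of x]
      by (intro power_mono mult_left_mono) auto
    then show "ennreal ((\<phi> n x)\<^sup>2) \<le> ennreal ((\<eta> x)\<^sup>2 * (max (U x - k) 0 powr q)\<^sup>2)"
      unfolding F_def by (intro ennreal_leI) (simp add: power_mult_distrib)
  qed
  show ?thesis
  proof (cases "?XL = \<infinity>")
    case True
    then show ?thesis using eps by (simp add: ennreal_mult_top)
  next
    case False
    have stepc: "(\<lambda>n. \<integral>\<^sup>+x. ennreal (A x * (norm (gn n x))\<^sup>2) \<partial>lborel) \<longlonglongrightarrow> ?XL"
    proof -
      define c where "c = (q + 1) / q"
      have cq: "c * q = q + 1" unfolding c_def using q by simp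
      have c0: "c \<ge> 0" unfolding c_def using q by simp
      define w1 where "w1 x = 2 * (1 + c)\<^sup>2 * A x * (F x * norm (dvec D\<eta> x))\<^sup>2" for x
      define w2 where "w2 x = 2 * c\<^sup>2 * (A x * (norm (gh x))\<^sup>2)" for x
      have w1nn: "w1 x \<ge> 0" for x unfolding w1_def using Ann[of x] by simp
      have w2nn: "w2 x \<ge> 0" for x unfolding w2_def using Ann[of x] by simp
      have w1m[measurable]: "w1 \<in> borel_measurable borel" unfolding w1_def[abs_def] by measurable
      have w2m[measurable]: "w2 \<in> borel_measurable borel" unfolding w2_def[abs_def] by measurable
      have bound: "A x * (norm (gn n x))\<^sup>2 \<le> w1 x + w2 x" for n x
      proof -
        define g where "g = Gf q (\<delta> n) (U x - k)"
        define d where "d = Gd q (\<delta> n) (U x - k)"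
        define de where "de = dvec D\<eta> x"
        define du where "du = dvec DU x"
        have g0: "0 \<le> g" "g \<le> F x" unfolding g_def using Gf_leF[of n x] by auto
        have d0: "0 \<le> d" unfolding d_def by (rule Gd_ge0[OF q \<delta>pos])
        have Pf0: "0 \<le> Pf x" unfolding Pf_def by simp
        have dle: "d \<le> c * (q * Pf x)"
        proof (cases "U x > k")
          case True
          have "d \<le> (q + 1) * (U x - k) powr (q - 1)" unfolding d_def
            by (rule Gd_le[OF q \<delta>pos]) (use True in simp)
          also have "\<dots> = c * (q * Pf x)" unfolding Pf_def using True cq by (simp add: mult.assoc[symmetric])
          finally show ?thesis .
        next
          case False
          then have "d = 0" unfolding d_def by (intro Gf_nonpos(2)) simp
          then show ?thesis using c0 q Pf0 by simp
        qed
        have gn_eq: "gn n x = g *\<^sub>R de + (\<eta> x * d) *\<^sub>R du" unfolding gn_def g_def d_def de_def du_def ..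
        have n1: "norm (gn n x) \<le> g * norm de + (\<eta> x * d) * norm du"
        proof -
          have "norm (gn n x) \<le> norm (g *\<^sub>R de) + norm ((\<eta> x * d) *\<^sub>R du)"
            unfolding gn_eq by (rule norm_triangle_ineq)
          also have "\<dots> = g * norm de + (\<eta> x * d) * norm du"
            using g0 d0 \<eta>nn[of x] by simp
          finally show ?thesis .
        qed
        have n2: "(\<eta> x * d) * norm du \<le> c * ((\<eta> x * (q * Pf x)) * norm du)"
        proof -
          have "\<eta> x * d \<le> \<eta> x * (c * (q * Pf x))" by (rule mult_left_mono[OF dle \<eta>nn])
          then have "(\<eta> x * d) * norm du \<le> (\<eta> x * (c * (q * Pf x))) * norm du"
            by (rule mult_right_mono) simp
          then show ?thesis by (simp add: algebra_simps)
        qed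
        have n3: "(\<eta> x * (q * Pf x)) * norm du \<le> norm (gh x) + F x * norm de"
        proof -
          have nn: "0 \<le> \<eta> x * (q * Pf x)" using \<eta>nn[of x] q Pf0 by simp
          have "(\<eta> x * (q * Pf x)) * norm du = norm ((\<eta> x * (q * Pf x)) *\<^sub>R du)" using nn by simp
          also have "(\<eta> x * (q * Pf x)) *\<^sub>R du = gh x - F x *\<^sub>R de" unfolding gh_eq de_def du_def by simp
          also have "norm (gh x - F x *\<^sub>R de) \<le> norm (gh x) + norm (F x *\<^sub>R de)" by (rule norm_triangle_ineq4)
          also have "norm (F x *\<^sub>R de) = F x * norm de" using Fnn[of x] by simp
          finally show ?thesis .
        qed
        have n4: "norm (gn n x) \<le> (1 + c) * (F x * norm de) + c * norm (gh x)"
        proof -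
          have "g * norm de \<le> F x * norm de" using g0 by (intro mult_right_mono) auto
          moreover have "c * ((\<eta> x * (q * Pf x)) * norm du) \<le> c * (norm (gh x) + F x * norm de)"
            using n3 c0 by (rule mult_left_mono)
          ultimately show ?thesis using n1 n2 by (simp add: algebra_simps)
        qed
        have "(norm (gn n x))\<^sup>2 \<le> ((1 + c) * (F x * norm de) + c * norm (gh x))\<^sup>2"
          by (rule power_mono[OF n4]) simp
        also have "\<dots> \<le> 2 * ((1 + c) * (F x * norm de))\<^sup>2 + 2 * (c * norm (gh x))\<^sup>2" by (rule sq_sum_le)
        finally have "A x * (norm (gn n x))\<^sup>2 \<le> A x * (2 * ((1 + c) * (F x * norm de))\<^sup>2 + 2 * (c * norm (gh x))\<^sup>2)"
          using Ann[of x] by (rule mult_left_mono)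
        also have "\<dots> = w1 x + w2 x" unfolding w1_def w2_def de_def by (rule alg_id)
        finally show ?thesis .
      qed
      have w1fin: "(\<integral>\<^sup>+x. ennreal (w1 x) \<partial>lborel) < \<infinity>"
      proof -
        have Fc: "continuous_on UNIV F" unfolding F_def
          by (rule continuous_on_powr') (use q Ucont in \<open>auto intro!: continuous_intros\<close>)
        have w1eq: "w1 x = 2 * (1 + c)\<^sup>2 * A x * (F x)\<^sup>2 * (\<Sum>i\<in>UNIV. (D\<eta> x (axis i 1))\<^sup>2)" for x
          unfolding w1_def power_mult_distrib norm_dvec_sq by simp
        have w1c: "continuous_on UNIV w1" unfolding w1eq[abs_def]
          by (intro continuous_intros Ac Fc \<eta>c)
        obtain M where M: "\<forall>x\<in>cball x0 R. \<bar>w1 x\<bar> \<le> M"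
          using cont_bound[OF compact_cball continuous_on_subset[OF w1c subset_UNIV]] by blast
        have le: "ennreal (w1 x) \<le> ennreal M * indicator (cball x0 R) x" for x
        proof (cases "x \<in> cball x0 R")
          case True
          then have "w1 x \<le> M" using M by (meson abs_ge_self order_trans)
          then show ?thesis using True by (simp add: ennreal_leI)
        next
          case False
          then have "\<eta> x = 0" using supp by auto
          then have "dvec D\<eta> x = 0" unfolding dvec_def
            using eta_zero_deriv[OF \<eta>nn \<eta>d] by (simp add: vec_eq_iff)
          then show ?thesis using False unfolding w1_def by simp
        qed
        have "(\<integral>\<^sup>+x. ennreal (w1 x) \<partial>lborel) \<le> (\<integral>\<^sup>+x. ennreal M * indicator (cball x0 R) x \<partial>lborel)"
          by (rule nn_integral_mono) (rule le)
        also have "\<dots> = ennreal M * emeasure lborel (cball x0 R)"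
          by (rule nn_integral_cmult_indicator) simp
        also have "\<dots> < \<infinity>" using emeasure_compact_finite[OF compact_cball, of x0 R]
          by (simp add: ennreal_mult_less_top)
        finally show ?thesis .
      qed
      have "(\<integral>\<^sup>+x. ennreal (w1 x + w2 x) \<partial>lborel)
          = (\<integral>\<^sup>+x. ennreal (w1 x) \<partial>lborel) + (\<integral>\<^sup>+x. ennreal (w2 x) \<partial>lborel)"
        using w1nn w2nn by (subst nn_integral_add[symmetric]) (auto simp: ennreal_plus)
      also have "(\<integral>\<^sup>+x. ennreal (w2 x) \<partial>lborel) = ennreal (2 * c\<^sup>2) * ?XL"
      proof -
        have m: "(\<lambda>x. ennreal (A x * (norm (gh x))\<^sup>2)) \<in> borel_measurable lborel" by measurable
        have e: "ennreal (w2 x) = ennreal (2 * c\<^sup>2) * ennreal (A x * (norm (gh x))\<^sup>2)" for x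
          unfolding w2_def using Ann[of x] by (simp add: ennreal_mult)
        show ?thesis unfolding e by (subst nn_integral_cmult[OF m]) (simp add: gh_def)
      qed
      finally have wfin: "(\<integral>\<^sup>+x. ennreal (w1 x + w2 x) \<partial>lborel) < \<infinity>"
        using w1fin False by (simp add: ennreal_mult_less_top less_top)
      have lim: "(\<lambda>n. ennreal (A x * (norm (gn n x))\<^sup>2)) \<longlonglongrightarrow> ennreal (A x * (norm (gh x))\<^sup>2)" for x
      proof -
        have l1: "(\<lambda>n. Gf q (\<delta> n) (U x - k)) \<longlonglongrightarrow> F x" unfolding \<delta>_def F_def by (rule Gf_lim)
        have l2: "(\<lambda>n. Gd q (\<delta> n) (U x - k)) \<longlonglongrightarrow> q * Pf x"
          using Gd_lim[OF q, of "U x - k"] unfolding \<delta>_def Pf_def by (cases "U x > k") auto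
        have "(\<lambda>n. gn n x) \<longlonglongrightarrow> gh x" unfolding gn_def gh_eq
          by (intro tendsto_add tendsto_scaleR tendsto_mult tendsto_const l1 l2)
        then show ?thesis by (intro tendsto_ennrealI tendsto_mult tendsto_const tendsto_power tendsto_norm)
      qed
      show ?thesis unfolding gh_def[symmetric]
      proof (rule nn_integral_dominated_convergence[where w="\<lambda>x. ennreal (w1 x + w2 x)"])
        show "\<And>n. AE x in lborel. ennreal (A x * (norm (gn n x))\<^sup>2) \<le> ennreal (w1 x + w2 x)"
          using bound by (intro AE_I2 ennreal_leI) 
        show "AE x in lborel. (\<lambda>n. ennreal (A x * (norm (gn n x))\<^sup>2)) \<longlonglongrightarrow> ennreal (A x * (norm (gh x))\<^sup>2)"
          using lim by (intro AE_I2)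
      qed (use wfin in simp_all)
    qed
    have lim2: "(\<lambda>n. ennreal \<epsilon> * (\<integral>\<^sup>+x. ennreal (A x * (norm (gn n x))\<^sup>2) \<partial>lborel) + ennreal C * ?Y)
        \<longlonglongrightarrow> ennreal \<epsilon> * ?XL + ennreal C * ?Y"
      by (intro tendsto_add ennreal_tendsto_cmult stepc tendsto_const) simp
    show ?thesis
    proof (rule LIMSEQ_le[OF stepa lim2], intro exI allI impI)
      fix n
      have cm: "ennreal C * (\<integral>\<^sup>+x. ennreal ((\<phi> n x)\<^sup>2) \<partial>lborel) \<le> ennreal C * ?Y"
        by (intro mult_left_mono stepb) simp
      show "(\<integral>\<^sup>+x. ennreal (U x * (\<phi> n x)\<^sup>2) \<partial>lborel)
          \<le> ennreal \<epsilon> * (\<integral>\<^sup>+x. ennreal (A x * (norm (gn n x))\<^sup>2) \<partial>lborel) + ennreal C * ?Y"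
        using order_trans[OF Pn[of n] add_left_mono[OF cm]] .
    qed
  qed
qed

lemma nn_int_meas:
  fixes f :: "real \<Rightarrow> real^3 \<Rightarrow> ennreal"
  assumes "(\<lambda>z. f (fst z) (snd z)) \<in> borel_measurable borel"
  shows "(\<lambda>s. \<integral>\<^sup>+x. f s x \<partial>lborel) \<in> borel_measurable lborel"
proof -
  have "case_prod f \<in> borel_measurable (lborel \<Otimes>\<^sub>M lborel)"
    unfolding lborel_prod using assms by (simp add: case_prod_beta')
  then show ?thesis by (rule lborel.borel_measurable_nn_integral)
qed

lemma pow_conv: "(max r 0 powr (p / 2))\<^sup>2 = max r 0 powr p" for r p :: real
  by (simp add: power2_eq_square powr_add[symmetric])

lemma second_pt:
  fixes u k p e :: real
  assumes u: "u \<ge> 0" and k: "k \<ge> 0" and p: "p > 1" and e: "e \<ge> 0"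
  shows "k * (e * u * max (u - k) 0 powr (p - 1))
    \<le> e * u * max (u - k) 0 powr p + 2 * k\<^sup>2 * (e * max (u - k) 0 powr (p - 1))"
proof (cases "u > k")
  case False
  then have "max (u - k) 0 = 0" by simp
  then show ?thesis by simp
next
  case True
  define m where "m = u - k"
  have m: "m > 0" "max (u - k) 0 = m" using True unfolding m_def by auto
  have mp: "m powr p = m * m powr (p - 1)" using m by (simp add: powr_diff)
  have pos: "0 \<le> m powr (p - 1)" by simp
  have nn1: "0 \<le> e * u * m powr p" using e u by simp
  have nn2: "0 \<le> 2 * k\<^sup>2 * (e * m powr (p - 1))" using e by simp
  show ?thesis
  proof (cases "m \<ge> k")
    case True
    have "k * (e * u * m powr (p - 1)) \<le> m * (e * u * m powr (p - 1))"
      by (rule mult_right_mono[OF True]) (use e u pos in simp)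
    also have "\<dots> = e * u * m powr p" by (simp add: mp)
    finally have "k * (e * u * m powr (p - 1)) \<le> e * u * m powr p + 2 * k\<^sup>2 * (e * m powr (p - 1))"
      using nn2 by linarith
    then show ?thesis using m(2) by simp
  next
    case False
    then have "u \<le> 2 * k" unfolding m_def by simp
    have "k * (e * u * m powr (p - 1)) = (k * u) * (e * m powr (p - 1))" by simp
    also have "\<dots> \<le> (2 * k\<^sup>2) * (e * m powr (p - 1))"
    proof (rule mult_right_mono)
      have "k * u \<le> k * (2 * k)" using \<open>u \<le> 2 * k\<close> k by (rule mult_left_mono)
      then show "k * u \<le> 2 * k\<^sup>2" by (simp add: power2_eq_square)
    qed (use e pos in simp)
    finally have "k * (e * u * m powr (p - 1)) \<le> e * u * m powr p + 2 * k\<^sup>2 * (e * m powr (p - 1))"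
      using nn1 by linarith
    then show ?thesis using m(2) by simp
  qed
qed

lemma slice_deriv:
  fixes u :: "real^3 \<Rightarrow> real \<Rightarrow> real"
  assumes sm: "smooth_on (UNIV \<times> {0<..}) (\<lambda>z. u (fst z) (snd z))" and s: "s > 0"
  shows "((\<lambda>x. u x s) has_derivative (\<lambda>v. frechet_derivative (\<lambda>z. u (fst z) (snd z)) (at (x, s)) (v, 0))) (at x)"
proof -
  let ?uj = "\<lambda>z. u (fst z) (snd z)"
  have "?uj differentiable (at (x, s))" using smooth_diff[OF sm] s by simp
  then have d: "(?uj has_derivative frechet_derivative ?uj (at (x, s))) (at (x, s))"
    using frechet_derivative_works by blast
  have p: "((\<lambda>x. (x, s)) has_derivative (\<lambda>v. (v, 0))) (at x)"
    by (auto intro!: derivative_eq_intros)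
  from diff_chain_at[OF p d] show ?thesis by (simp add: o_def)
qed

lemma slice_cont:
  fixes f :: "(real^3) \<times> real \<Rightarrow> real"
  assumes "continuous_on (UNIV \<times> {0<..}) f" "s > 0"
  shows "continuous_on UNIV (\<lambda>x. f (x, s))"
proof -
  have "continuous_on UNIV (\<lambda>x. (x, s))" by (intro continuous_intros)
  from continuous_on_compose2[OF assms(1) this] show ?thesis using assms(2) by auto
qed

lemma swap_cont_indicator_meas:
  fixes f :: "(real^3) \<times> real \<Rightarrow> real"
  assumes "continuous_on (UNIV \<times> {0<..}) f"
  shows "(\<lambda>z. if fst z > 0 then f (snd z, fst z) else 0) \<in> borel_measurable borel"
proof -
  let ?S = "{z :: real \<times> (real^3). fst z > 0}"
  have op: "open ?S" by (rule open_Collect_less) (auto intro: continuous_intros)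
  have "continuous_on ?S (\<lambda>z. (snd z, fst z))" by (intro continuous_intros)
  moreover have "(\<lambda>z. (snd z, fst z)) ` ?S \<subseteq> UNIV \<times> {0<..}" by auto
  ultimately have "continuous_on ?S (\<lambda>z. f (snd z, fst z))"
    using continuous_on_compose2[OF assms] by blast
  from borel_measurable_continuous_on_indicator[OF borel_open[OF op] this]
  have "(\<lambda>z. indicator ?S z *\<^sub>R f (snd z, fst z)) \<in> borel_measurable borel" .
  moreover have "(\<lambda>z. indicator ?S z *\<^sub>R f (snd z, fst z)) = (\<lambda>z. if fst z > 0 then f (snd z, fst z) else 0)"
    by (auto simp: fun_eq_iff indicator_def)
  ultimately show ?thesis by simp
qed

lemma set_int_cong_I:
  fixes f g :: "real \<Rightarrow> ennreal"
  assumes "\<And>s. s \<in> {t<..T} \<Longrightarrow> f s = g s"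
  shows "(\<integral>\<^sup>+s\<in>{t..T}. f s \<partial>lborel) = (\<integral>\<^sup>+s. g s * indicator {t<..T} s \<partial>lborel)"
proof (rule nn_integral_cong_AE)
  show "AE s in lborel. f s * indicator {t..T} s = g s * indicator {t<..T} s"
    using AE_lborel_singleton[of t]
  proof eventually_elim
    case (elim s)
    then show ?case using assms[of s] by (cases "s \<in> {t<..T}") (auto simp: indicator_def)
  qed
qed

theorem mainTheorem2:
  fixes u :: "real^3 \<Rightarrow> real \<Rightarrow> real"
  assumes nonneg: "\<forall>x t. t \<ge> 0 \<longrightarrow> u x t \<ge> 0"
    and smooth: "smooth_on (UNIV \<times> {0<..}) (\<lambda>z. u (fst z) (snd z))"
    and cont: "continuous_on (UNIV \<times> {0..}) (\<lambda>z. u (fst z) (snd z))"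
    and decay: "\<forall>t\<ge>0. integrable lborel (\<lambda>x. u x t)"
    and smooth_a: "smooth_on (UNIV \<times> {0<..}) (\<lambda>z. newton_pot u (fst z) (snd z))"
    and pde: "solves_PDE u"
    and poinc: "eps_poincare u"
  shows "\<forall>p::real. p > 1 \<longrightarrow> (\<forall>R::real. R > 0 \<longrightarrow> (\<forall>\<epsilon>::real. \<epsilon> > 0 \<longrightarrow>
    (\<exists>C::real. \<forall>k t T. \<forall>x0::real^3. \<forall>\<eta>::real^3 \<Rightarrow> real.
      k \<ge> 0 \<and> 0 \<le> t \<and> t < T \<and> smooth_on UNIV \<eta> \<and> (\<forall>x. \<eta> x \<ge> 0)
      \<and> {x. \<eta> x \<noteq> 0} \<subseteq> ball x0 R \<longrightarrow>
      (let uk = (\<lambda>x s. max (u x s - k) 0);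
           gr = (\<lambda>x s. norm (grad3 (\<lambda>y. \<eta> y * (uk y s) powr (p / 2)) x))
       in
      ennreal (p - 1) * (\<integral>\<^sup>+s\<in>{t..T}. (\<integral>\<^sup>+x. ennreal ((\<eta> x)\<^sup>2 * u x s * (uk x s) powr p) \<partial>lborel) \<partial>lborel)
        \<le> ennreal (\<epsilon> * (p - 1)) *
             (\<integral>\<^sup>+s\<in>{t..T}. (\<integral>\<^sup>+x\<in>ball x0 R. ennreal (newton_pot u x s * (gr x s)\<^sup>2) \<partial>lborel) \<partial>lborel)
          + ennreal C * (\<integral>\<^sup>+s\<in>{t..T}. (\<integral>\<^sup>+x\<in>ball x0 R. ennreal ((\<eta> x)\<^sup>2 * (uk x s) powr p) \<partial>lborel) \<partial>lborel)
      \<and>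
      ennreal (p * k) * (\<integral>\<^sup>+s\<in>{t..T}. (\<integral>\<^sup>+x. ennreal ((\<eta> x)\<^sup>2 * u x s * (uk x s) powr (p - 1)) \<partial>lborel) \<partial>lborel)
        \<le> ennreal (p * \<epsilon>) *
             (\<integral>\<^sup>+s\<in>{t..T}. (\<integral>\<^sup>+x. ennreal (newton_pot u x s * (gr x s)\<^sup>2) \<partial>lborel) \<partial>lborel)
          + ennreal C * (\<integral>\<^sup>+s\<in>{t..T}. (\<integral>\<^sup>+x. ennreal ((\<eta> x)\<^sup>2 * (uk x s) powr p) \<partial>lborel) \<partial>lborel)
          + ennreal (2 * p * k\<^sup>2) *
             (\<integral>\<^sup>+s\<in>{0..T}. (\<integral>\<^sup>+x. ennreal ((\<eta> x)\<^sup>2 * (uk x s) powr (p - 1)) \<partial>lborel) \<partial>lborel)))))"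
proof (intro allI impI)
  fix p R \<epsilon> :: real
  assume p: "p > 1" and R: "R > 0" and eps: "\<epsilon> > 0"
  obtain C\<epsilon> where C\<epsilon>: "C\<epsilon> > 0" and PC: "\<forall>t>0. \<forall>\<phi> g. weak_grad \<phi> g \<longrightarrow>
        (\<integral>\<^sup>+x. ennreal (u x t * (\<phi> x)\<^sup>2) \<partial>lborel)
          \<le> ennreal \<epsilon> * (\<integral>\<^sup>+x. ennreal (newton_pot u x t * (norm (g x))\<^sup>2) \<partial>lborel)
            + ennreal C\<epsilon> * (\<integral>\<^sup>+x. ennreal ((\<phi> x)\<^sup>2) \<partial>lborel)"
    using poinc eps unfolding eps_poincare_def by blast
  define q where "q = p / 2"
  have q: "q > 0" unfolding q_def using p by simp
  show "\<exists>C::real. \<forall>k t T. \<forall>x0::real^3. \<forall>\<eta>::real^3 \<Rightarrow> real.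
      k \<ge> 0 \<and> 0 \<le> t \<and> t < T \<and> smooth_on UNIV \<eta> \<and> (\<forall>x. \<eta> x \<ge> 0)
      \<and> {x. \<eta> x \<noteq> 0} \<subseteq> ball x0 R \<longrightarrow>
      (let uk = (\<lambda>x s. max (u x s - k) 0);
           gr = (\<lambda>x s. norm (grad3 (\<lambda>y. \<eta> y * (uk y s) powr (p / 2)) x))
       in
      ennreal (p - 1) * (\<integral>\<^sup>+s\<in>{t..T}. (\<integral>\<^sup>+x. ennreal ((\<eta> x)\<^sup>2 * u x s * (uk x s) powr p) \<partial>lborel) \<partial>lborel)
        \<le> ennreal (\<epsilon> * (p - 1)) *
             (\<integral>\<^sup>+s\<in>{t..T}. (\<integral>\<^sup>+x\<in>ball x0 R. ennreal (newton_pot u x s * (gr x s)\<^sup>2) \<partial>lborel) \<partial>lborel)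
          + ennreal C * (\<integral>\<^sup>+s\<in>{t..T}. (\<integral>\<^sup>+x\<in>ball x0 R. ennreal ((\<eta> x)\<^sup>2 * (uk x s) powr p) \<partial>lborel) \<partial>lborel)
      \<and>
      ennreal (p * k) * (\<integral>\<^sup>+s\<in>{t..T}. (\<integral>\<^sup>+x. ennreal ((\<eta> x)\<^sup>2 * u x s * (uk x s) powr (p - 1)) \<partial>lborel) \<partial>lborel)
        \<le> ennreal (p * \<epsilon>) *
             (\<integral>\<^sup>+s\<in>{t..T}. (\<integral>\<^sup>+x. ennreal (newton_pot u x s * (gr x s)\<^sup>2) \<partial>lborel) \<partial>lborel)
          + ennreal C * (\<integral>\<^sup>+s\<in>{t..T}. (\<integral>\<^sup>+x. ennreal ((\<eta> x)\<^sup>2 * (uk x s) powr p) \<partial>lborel) \<partial>lborel)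
          + ennreal (2 * p * k\<^sup>2) *
             (\<integral>\<^sup>+s\<in>{0..T}. (\<integral>\<^sup>+x. ennreal ((\<eta> x)\<^sup>2 * (uk x s) powr (p - 1)) \<partial>lborel) \<partial>lborel))"
  proof (rule exI[of _ "p * C\<epsilon>"], intro allI impI)
    fix k t T :: real and x0 :: "real^3" and \<eta> :: "real^3 \<Rightarrow> real"
    assume H: "k \<ge> 0 \<and> 0 \<le> t \<and> t < T \<and> smooth_on UNIV \<eta> \<and> (\<forall>x. \<eta> x \<ge> 0)
      \<and> {x. \<eta> x \<noteq> 0} \<subseteq> ball x0 R"
    then have k: "k \<ge> 0" and t: "0 \<le> t" and tT: "t < T" and \<eta>s: "smooth_on UNIV \<eta>"
      and \<eta>nn: "\<And>x. \<eta> x \<ge> 0" and supp: "{x. \<eta> x \<noteq> 0} \<subseteq> ball x0 R" by auto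

    define uj where "uj z = u (fst z) (snd z)" for z
    define Dfun where "Dfun s x v = frechet_derivative uj (at (x, s)) (v, 0)" for s x v
    define D\<eta> where "D\<eta> x v = frechet_derivative \<eta> (at x) v" for x v
    define gh where "gh s = ghat q k (\<lambda>x. u x s) (Dfun s) \<eta> D\<eta>" for s
    define ut where "ut s x = u x (max s 0)" for s x
    define At where "At s x = (if s > 0 then newton_pot u x s else 0)" for s x
    define DUt where "DUt s x v = (if s > 0 then Dfun s x v else 0)" for s x v
    define I where "I = {t<..T}"
    have smj: "smooth_on (UNIV \<times> {0<..}) uj" using smooth unfolding uj_def[abs_def] .
    have \<eta>d: "(\<eta> has_derivative D\<eta> x) (at x)" for x
      unfolding D\<eta>_def[abs_def] using smooth_diff[OF \<eta>s] frechet_derivative_works by blast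
    have \<eta>c: "continuous_on UNIV (\<lambda>x. D\<eta> x v)" for v
      unfolding D\<eta>_def using smooth_deriv_cont[OF \<eta>s] .
    have \<eta>cont: "continuous_on UNIV \<eta>" using smooth_cont[OF \<eta>s] .
    have Ud: "((\<lambda>x. u x s) has_derivative Dfun s x) (at x)" if "s > 0" for s x
      unfolding Dfun_def[abs_def] uj_def using slice_deriv[OF smooth that] by simp
    have Uc: "continuous_on UNIV (\<lambda>x. Dfun s x v)" if "s > 0" for s v
      unfolding Dfun_def using slice_cont[OF smooth_deriv_cont[OF smj] that] by simp
    have Ac: "continuous_on UNIV (\<lambda>x. newton_pot u x s)" if "s > 0" for s
      using slice_cont[OF smooth_cont[OF smooth_a] that] by simp
    have Ann: "newton_pot u x s \<ge> 0" if "s \<ge> 0" for s x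
      unfolding newton_pot_def using nonneg that by (auto intro!: integral_nonneg divide_nonneg_nonneg)
    have ucont: "continuous_on UNIV (\<lambda>z. ut (fst z) (snd z))"
    proof -
      have c: "continuous_on UNIV (\<lambda>z::real \<times> (real^3). (snd z, max (fst z) 0))" by (intro continuous_intros)
      have i: "(\<lambda>z::real \<times> (real^3). (snd z, max (fst z) 0)) ` UNIV \<subseteq> UNIV \<times> {0..}" by auto
      show ?thesis using continuous_on_compose2[OF cont c i] unfolding ut_def by simp
    qed
    have utm[measurable]: "(\<lambda>z. ut (fst z) (snd z)) \<in> borel_measurable borel"
      using ucont by (simp add: borel_measurable_continuous_onI)
    have \<eta>m[measurable]: "\<eta> \<in> borel_measurable borel"
      using \<eta>cont by (simp add: borel_measurable_continuous_onI)
    have d\<eta>m[measurable]: "dvec D\<eta> \<in> borel_measurable borel"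
      unfolding dvec_def by (rule vec_meas) (use \<eta>c in \<open>simp add: borel_measurable_continuous_onI\<close>)
    have Atm[measurable]: "(\<lambda>z. At (fst z) (snd z)) \<in> borel_measurable borel"
      unfolding At_def using swap_cont_indicator_meas[OF smooth_cont[OF smooth_a]] by (simp only: fst_conv snd_conv)
    have DUtm: "(\<lambda>z. DUt (fst z) (snd z) v) \<in> borel_measurable borel" for v
      unfolding DUt_def Dfun_def using swap_cont_indicator_meas[OF smooth_deriv_cont[OF smj, of "(v, 0)"]] by (simp only: fst_conv snd_conv prod.collapse)
    have dDUm[measurable]: "(\<lambda>z. dvec (DUt (fst z)) (snd z)) \<in> borel_measurable borel"
      unfolding dvec_def by (rule vec_meas) (use DUtm in simp)
    have slice: "(\<integral>\<^sup>+x. ennreal ((\<eta> x)\<^sup>2 * u x s * max (u x s - k) 0 powr p) \<partial>lborel)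
        \<le> ennreal \<epsilon> * (\<integral>\<^sup>+x. ennreal (newton_pot u x s * (norm (gh s x))\<^sup>2) \<partial>lborel)
          + ennreal C\<epsilon> * (\<integral>\<^sup>+x. ennreal ((\<eta> x)\<^sup>2 * max (u x s - k) 0 powr p) \<partial>lborel)" if s: "s > 0" for s
    proof -
      have P: "\<And>\<phi> g. weak_grad \<phi> g \<Longrightarrow>
        (\<integral>\<^sup>+x. ennreal (u x s * (\<phi> x)\<^sup>2) \<partial>lborel)
          \<le> ennreal \<epsilon> * (\<integral>\<^sup>+x. ennreal (newton_pot u x s * (norm (g x))\<^sup>2) \<partial>lborel)
            + ennreal C\<epsilon> * (\<integral>\<^sup>+x. ennreal ((\<phi> x)\<^sup>2) \<partial>lborel)"
        using PC s by blast
      have Unn: "\<And>x. u x s \<ge> 0" using nonneg s by simp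
      have "(\<integral>\<^sup>+x. ennreal ((\<eta> x)\<^sup>2 * u x s * (max (u x s - k) 0 powr q)\<^sup>2) \<partial>lborel)
        \<le> ennreal \<epsilon> * (\<integral>\<^sup>+x. ennreal (newton_pot u x s * (norm (ghat q k (\<lambda>x. u x s) (Dfun s) \<eta> D\<eta> x))\<^sup>2) \<partial>lborel)
          + ennreal C\<epsilon> * (\<integral>\<^sup>+x. ennreal ((\<eta> x)\<^sup>2 * (max (u x s - k) 0 powr q)\<^sup>2) \<partial>lborel)"
        by (rule time_slice[OF q eps _ Ud[OF s] Uc[OF s] \<eta>d \<eta>c \<eta>nn supp Unn Ac[OF s] Ann P])
           (use C\<epsilon> s in auto)
      then show ?thesis unfolding gh_def q_def pow_conv .
    qed

    define LHm where "LHm s = (\<integral>\<^sup>+x. ennreal ((\<eta> x)\<^sup>2 * ut s x * max (ut s x - k) 0 powr p) \<partial>lborel)" for s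
    define Ltm where "Ltm s = (\<integral>\<^sup>+x. ennreal (At s x * (norm (ghat q k (ut s) (DUt s) \<eta> D\<eta> x))\<^sup>2) \<partial>lborel)" for s
    define Ym where "Ym s = (\<integral>\<^sup>+x. ennreal ((\<eta> x)\<^sup>2 * max (ut s x - k) 0 powr p) \<partial>lborel)" for s
    define Zm where "Zm s = (\<integral>\<^sup>+x. ennreal ((\<eta> x)\<^sup>2 * max (ut s x - k) 0 powr (p - 1)) \<partial>lborel)" for s
    define LH2m where "LH2m s = (\<integral>\<^sup>+x. ennreal ((\<eta> x)\<^sup>2 * ut s x * max (ut s x - k) 0 powr (p - 1)) \<partial>lborel)" for s
    define Uz where "Uz z = ut (fst z) (snd z)" for z
    define Ez where "Ez z = \<eta> (snd z)" for z :: "real \<times> (real^3)"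
    define Az where "Az z = At (fst z) (snd z)" for z
    define dEz where "dEz z = dvec D\<eta> (snd z)" for z :: "real \<times> (real^3)"
    define dUz where "dUz z = dvec (DUt (fst z)) (snd z)" for z
    have Uzm[measurable]: "Uz \<in> borel_measurable borel" unfolding Uz_def[abs_def] by (rule utm)
    have Azm[measurable]: "Az \<in> borel_measurable borel" unfolding Az_def[abs_def] by (rule Atm)
    have dUzm[measurable]: "dUz \<in> borel_measurable borel" unfolding dUz_def[abs_def] by (rule dDUm)
    have sndm: "(snd :: real \<times> (real^3) \<Rightarrow> real^3) \<in> borel_measurable borel"
      by (intro borel_measurable_continuous_onI continuous_intros)
    have Ezm[measurable]: "Ez \<in> borel_measurable borel" unfolding Ez_def[abs_def]
      using measurable_compose[OF sndm \<eta>m] by (simp add: o_def)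
    have dEzm[measurable]: "dEz \<in> borel_measurable borel" unfolding dEz_def[abs_def]
      using measurable_compose[OF sndm d\<eta>m] by (simp add: o_def)
    have LHmm[measurable]: "LHm \<in> borel_measurable lborel"
      unfolding LHm_def by (rule nn_int_meas) (unfold Uz_def[symmetric] Ez_def[symmetric], measurable)
    have Ltmm[measurable]: "Ltm \<in> borel_measurable lborel"
      unfolding Ltm_def ghat_def
      by (rule nn_int_meas) (unfold Uz_def[symmetric] Ez_def[symmetric] Az_def[symmetric] dEz_def[symmetric] dUz_def[symmetric], measurable)
    have Ymm[measurable]: "Ym \<in> borel_measurable lborel"
      unfolding Ym_def by (rule nn_int_meas) (unfold Uz_def[symmetric] Ez_def[symmetric], measurable)
    have Zmm[measurable]: "Zm \<in> borel_measurable lborel"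
      unfolding Zm_def by (rule nn_int_meas) (unfold Uz_def[symmetric] Ez_def[symmetric], measurable)
    have LH2mm[measurable]: "LH2m \<in> borel_measurable lborel"
      unfolding LH2m_def by (rule nn_int_meas) (unfold Uz_def[symmetric] Ez_def[symmetric], measurable)
    have utI: "ut s = (\<lambda>x. u x s)" if "s \<ge> 0" for s unfolding ut_def using that by (simp add: fun_eq_iff)
    have LHmI: "LHm s = (\<integral>\<^sup>+x. ennreal ((\<eta> x)\<^sup>2 * u x s * max (u x s - k) 0 powr p) \<partial>lborel)" if "s \<ge> 0" for s
      unfolding LHm_def utI[OF that] ..
    have YmI: "Ym s = (\<integral>\<^sup>+x. ennreal ((\<eta> x)\<^sup>2 * max (u x s - k) 0 powr p) \<partial>lborel)" if "s \<ge> 0" for s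
      unfolding Ym_def utI[OF that] ..
    have ZmI: "Zm s = (\<integral>\<^sup>+x. ennreal ((\<eta> x)\<^sup>2 * max (u x s - k) 0 powr (p - 1)) \<partial>lborel)" if "s \<ge> 0" for s
      unfolding Zm_def utI[OF that] ..
    have LH2mI: "LH2m s = (\<integral>\<^sup>+x. ennreal ((\<eta> x)\<^sup>2 * u x s * max (u x s - k) 0 powr (p - 1)) \<partial>lborel)" if "s \<ge> 0" for s
      unfolding LH2m_def utI[OF that] ..
    have LtmI: "Ltm s = (\<integral>\<^sup>+x. ennreal (newton_pot u x s * (norm (gh s x))\<^sup>2) \<partial>lborel)" if "s > 0" for s
    proof -
      have "DUt s = Dfun s" unfolding DUt_def using that by (simp add: fun_eq_iff)
      moreover have "At s x = newton_pot u x s" for x unfolding At_def using that by simp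
      ultimately show ?thesis unfolding Ltm_def gh_def utI[OF less_imp_le[OF that]] by simp
    qed
    have Ym_ball: "Ym s = (\<integral>\<^sup>+x\<in>ball x0 R. ennreal ((\<eta> x)\<^sup>2 * max (u x s - k) 0 powr p) \<partial>lborel)" if "s \<ge> 0" for s
      unfolding YmI[OF that]
    proof (rule nn_integral_cong)
      fix x show "ennreal ((\<eta> x)\<^sup>2 * max (u x s - k) 0 powr p)
          = ennreal ((\<eta> x)\<^sup>2 * max (u x s - k) 0 powr p) * indicator (ball x0 R) x"
      proof (cases "x \<in> ball x0 R")
        case False then have "\<eta> x = 0" using supp by auto
        then show ?thesis by simp
      qed simp
    qed
    have Lt_le: "Ltm s \<le> (\<integral>\<^sup>+x. ennreal (newton_pot u x s * (norm (grad3 (\<lambda>y. \<eta> y * max (u y s - k) 0 powr (p / 2)) x))\<^sup>2) * indicator (ball x0 R) x \<partial>lborel)"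
      if s: "s > 0" for s
      unfolding LtmI[OF s]
    proof (rule nn_integral_mono)
      fix x
      show "ennreal (newton_pot u x s * (norm (gh s x))\<^sup>2)
         \<le> ennreal (newton_pot u x s * (norm (grad3 (\<lambda>y. \<eta> y * max (u y s - k) 0 powr (p / 2)) x))\<^sup>2) * indicator (ball x0 R) x"
      proof (cases "x \<in> ball x0 R")
        case True
        have "newton_pot u x s * (norm (gh s x))\<^sup>2
           \<le> newton_pot u x s * (norm (grad3 (\<lambda>y. \<eta> y * max (u y s - k) 0 powr (p / 2)) x))\<^sup>2"
          unfolding gh_def q_def[symmetric]
          by (rule ghat_le_grad[OF q Ann Ud[OF s] \<eta>d]) (use s in simp)
        then show ?thesis using True by (simp add: ennreal_leI)
      next
        case False then have "\<eta> x = 0" using supp by auto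
        then have "gh s x = 0" unfolding gh_def by (rule ghat_eta0[OF \<eta>nn \<eta>d])
        then show ?thesis by simp
      qed
    qed
    have Lt_le2: "Ltm s \<le> (\<integral>\<^sup>+x. ennreal (newton_pot u x s * (norm (grad3 (\<lambda>y. \<eta> y * max (u y s - k) 0 powr (p / 2)) x))\<^sup>2) \<partial>lborel)"
      if s: "s > 0" for s
      unfolding LtmI[OF s]
    proof (rule nn_integral_mono)
      fix x
      have "newton_pot u x s * (norm (gh s x))\<^sup>2
         \<le> newton_pot u x s * (norm (grad3 (\<lambda>y. \<eta> y * max (u y s - k) 0 powr (p / 2)) x))\<^sup>2"
        unfolding gh_def q_def[symmetric]
        by (rule ghat_le_grad[OF q Ann Ud[OF s] \<eta>d]) (use s in simp)
      then show "ennreal (newton_pot u x s * (norm (gh s x))\<^sup>2)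
         \<le> ennreal (newton_pot u x s * (norm (grad3 (\<lambda>y. \<eta> y * max (u y s - k) 0 powr (p / 2)) x))\<^sup>2)"
        by (simp add: ennreal_leI)
    qed
    have sliceI: "LHm s \<le> ennreal \<epsilon> * Ltm s + ennreal C\<epsilon> * Ym s" if s: "s > 0" for s
      unfolding LHmI[OF less_imp_le[OF s]] LtmI[OF s] YmI[OF less_imp_le[OF s]] by (rule slice[OF s])
    have Ipos: "s \<in> I \<Longrightarrow> s > 0" for s unfolding I_def using t by auto
    have Im[measurable]: "I \<in> sets lborel" unfolding I_def by simp
    have main1: "(\<integral>\<^sup>+s. LHm s * indicator I s \<partial>lborel)
        \<le> ennreal \<epsilon> * (\<integral>\<^sup>+s. Ltm s * indicator I s \<partial>lborel) + ennreal C\<epsilon> * (\<integral>\<^sup>+s. Ym s * indicator I s \<partial>lborel)"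
    proof -
      have "(\<integral>\<^sup>+s. LHm s * indicator I s \<partial>lborel)
          \<le> (\<integral>\<^sup>+s. ennreal \<epsilon> * (Ltm s * indicator I s) + ennreal C\<epsilon> * (Ym s * indicator I s) \<partial>lborel)"
      proof (rule nn_integral_mono)
        fix s show "LHm s * indicator I s \<le> ennreal \<epsilon> * (Ltm s * indicator I s) + ennreal C\<epsilon> * (Ym s * indicator I s)"
          using sliceI[OF Ipos[of s]] by (cases "s \<in> I") (auto simp: mult.assoc[symmetric])
      qed
      also have "\<dots> = ennreal \<epsilon> * (\<integral>\<^sup>+s. Ltm s * indicator I s \<partial>lborel) + ennreal C\<epsilon> * (\<integral>\<^sup>+s. Ym s * indicator I s \<partial>lborel)"
        by (simp add: nn_integral_add nn_integral_cmult)
      finally show ?thesis .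
    qed
    have G1: "ennreal (p - 1) * (\<integral>\<^sup>+s\<in>{t..T}. (\<integral>\<^sup>+x. ennreal ((\<eta> x)\<^sup>2 * u x s * (max (u x s - k) 0) powr p) \<partial>lborel) \<partial>lborel)
        \<le> ennreal (\<epsilon> * (p - 1)) *
             (\<integral>\<^sup>+s\<in>{t..T}. (\<integral>\<^sup>+x\<in>ball x0 R. ennreal (newton_pot u x s * (norm (grad3 (\<lambda>y. \<eta> y * (max (u y s - k) 0) powr (p / 2)) x))\<^sup>2) \<partial>lborel) \<partial>lborel)
          + ennreal (p * C\<epsilon>) * (\<integral>\<^sup>+s\<in>{t..T}. (\<integral>\<^sup>+x\<in>ball x0 R. ennreal ((\<eta> x)\<^sup>2 * (max (u x s - k) 0) powr p) \<partial>lborel) \<partial>lborel)"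
    proof -
      let ?GRb = "\<lambda>s. (\<integral>\<^sup>+x\<in>ball x0 R. ennreal (newton_pot u x s * (norm (grad3 (\<lambda>y. \<eta> y * (max (u y s - k) 0) powr (p / 2)) x))\<^sup>2) \<partial>lborel)"
      have e1: "(\<integral>\<^sup>+s\<in>{t..T}. (\<integral>\<^sup>+x. ennreal ((\<eta> x)\<^sup>2 * u x s * (max (u x s - k) 0) powr p) \<partial>lborel) \<partial>lborel)
          = (\<integral>\<^sup>+s. LHm s * indicator I s \<partial>lborel)"
        unfolding I_def by (rule set_int_cong_I) (use t in \<open>simp add: LHmI\<close>)
      have e2: "(\<integral>\<^sup>+s\<in>{t..T}. ?GRb s \<partial>lborel) = (\<integral>\<^sup>+s. ?GRb s * indicator I s \<partial>lborel)"
        unfolding I_def by (rule set_int_cong_I) simp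
      have e3: "(\<integral>\<^sup>+s\<in>{t..T}. (\<integral>\<^sup>+x\<in>ball x0 R. ennreal ((\<eta> x)\<^sup>2 * (max (u x s - k) 0) powr p) \<partial>lborel) \<partial>lborel)
          = (\<integral>\<^sup>+s. Ym s * indicator I s \<partial>lborel)"
        unfolding I_def by (rule set_int_cong_I) (use t in \<open>simp add: Ym_ball\<close>)
      have m2: "(\<integral>\<^sup>+s. Ltm s * indicator I s \<partial>lborel) \<le> (\<integral>\<^sup>+s. ?GRb s * indicator I s \<partial>lborel)"
      proof (rule nn_integral_mono)
        fix s show "Ltm s * indicator I s \<le> ?GRb s * indicator I s"
          using Lt_le[OF Ipos[of s]] by (cases "s \<in> I") auto
      qed
      have "ennreal (p - 1) * (\<integral>\<^sup>+s. LHm s * indicator I s \<partial>lborel)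
          \<le> ennreal (p - 1) * (ennreal \<epsilon> * (\<integral>\<^sup>+s. Ltm s * indicator I s \<partial>lborel) + ennreal C\<epsilon> * (\<integral>\<^sup>+s. Ym s * indicator I s \<partial>lborel))"
        by (rule mult_left_mono[OF main1]) simp
      also have "\<dots> \<le> ennreal (p - 1) * (ennreal \<epsilon> * (\<integral>\<^sup>+s. ?GRb s * indicator I s \<partial>lborel) + ennreal C\<epsilon> * (\<integral>\<^sup>+s. Ym s * indicator I s \<partial>lborel))"
        by (intro mult_left_mono add_right_mono m2) simp_all
      also have "\<dots> = ennreal (\<epsilon> * (p - 1)) * (\<integral>\<^sup>+s. ?GRb s * indicator I s \<partial>lborel)
          + ennreal ((p - 1) * C\<epsilon>) * (\<integral>\<^sup>+s. Ym s * indicator I s \<partial>lborel)"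
        using p eps C\<epsilon> by (simp add: ennreal_mult distrib_left mult.assoc mult.left_commute)
      also have "\<dots> \<le> ennreal (\<epsilon> * (p - 1)) * (\<integral>\<^sup>+s. ?GRb s * indicator I s \<partial>lborel)
          + ennreal (p * C\<epsilon>) * (\<integral>\<^sup>+s. Ym s * indicator I s \<partial>lborel)"
        using C\<epsilon> by (intro add_left_mono mult_right_mono ennreal_leI) simp_all
      finally show ?thesis unfolding e1 e2 e3 .
    qed
    have G2: "ennreal (p * k) * (\<integral>\<^sup>+s\<in>{t..T}. (\<integral>\<^sup>+x. ennreal ((\<eta> x)\<^sup>2 * u x s * (max (u x s - k) 0) powr (p - 1)) \<partial>lborel) \<partial>lborel)
        \<le> ennreal (p * \<epsilon>) *
             (\<integral>\<^sup>+s\<in>{t..T}. (\<integral>\<^sup>+x. ennreal (newton_pot u x s * (norm (grad3 (\<lambda>y. \<eta> y * (max (u y s - k) 0) powr (p / 2)) x))\<^sup>2) \<partial>lborel) \<partial>lborel)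
          + ennreal (p * C\<epsilon>) * (\<integral>\<^sup>+s\<in>{t..T}. (\<integral>\<^sup>+x. ennreal ((\<eta> x)\<^sup>2 * (max (u x s - k) 0) powr p) \<partial>lborel) \<partial>lborel)
          + ennreal (2 * p * k\<^sup>2) *
             (\<integral>\<^sup>+s\<in>{0..T}. (\<integral>\<^sup>+x. ennreal ((\<eta> x)\<^sup>2 * (max (u x s - k) 0) powr (p - 1)) \<partial>lborel) \<partial>lborel)"
    proof -
      let ?GR = "\<lambda>s. (\<integral>\<^sup>+x. ennreal (newton_pot u x s * (norm (grad3 (\<lambda>y. \<eta> y * (max (u y s - k) 0) powr (p / 2)) x))\<^sup>2) \<partial>lborel)"
      have e1: "(\<integral>\<^sup>+s\<in>{t..T}. (\<integral>\<^sup>+x. ennreal ((\<eta> x)\<^sup>2 * u x s * (max (u x s - k) 0) powr (p - 1)) \<partial>lborel) \<partial>lborel)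
          = (\<integral>\<^sup>+s. LH2m s * indicator I s \<partial>lborel)"
        unfolding I_def by (rule set_int_cong_I) (use t in \<open>simp add: LH2mI\<close>)
      have e2: "(\<integral>\<^sup>+s\<in>{t..T}. ?GR s \<partial>lborel) = (\<integral>\<^sup>+s. ?GR s * indicator I s \<partial>lborel)"
        unfolding I_def by (rule set_int_cong_I) simp
      have e3: "(\<integral>\<^sup>+s\<in>{t..T}. (\<integral>\<^sup>+x. ennreal ((\<eta> x)\<^sup>2 * (max (u x s - k) 0) powr p) \<partial>lborel) \<partial>lborel)
          = (\<integral>\<^sup>+s. Ym s * indicator I s \<partial>lborel)"
        unfolding I_def by (rule set_int_cong_I) (use t in \<open>simp add: YmI\<close>)
      have m2: "(\<integral>\<^sup>+s. Ltm s * indicator I s \<partial>lborel) \<le> (\<integral>\<^sup>+s. ?GR s * indicator I s \<partial>lborel)"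
      proof (rule nn_integral_mono)
        fix s show "Ltm s * indicator I s \<le> ?GR s * indicator I s"
          using Lt_le2[OF Ipos[of s]] by (cases "s \<in> I") auto
      qed
      have m3: "(\<integral>\<^sup>+s. Zm s * indicator I s \<partial>lborel)
          \<le> (\<integral>\<^sup>+s\<in>{0..T}. (\<integral>\<^sup>+x. ennreal ((\<eta> x)\<^sup>2 * (max (u x s - k) 0) powr (p - 1)) \<partial>lborel) \<partial>lborel)"
      proof (rule nn_integral_mono)
        fix s show "Zm s * indicator I s
            \<le> (\<integral>\<^sup>+x. ennreal ((\<eta> x)\<^sup>2 * (max (u x s - k) 0) powr (p - 1)) \<partial>lborel) * indicator {0..T} s"
        proof (cases "s \<in> I")
          case True
          then have "s \<ge> 0" "s \<in> {0..T}" using Ipos[OF True] unfolding I_def by auto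
          then show ?thesis using True ZmI by simp
        qed simp
      qed
      have S5: "ennreal (p * k) * LH2m s \<le> ennreal p * LHm s + ennreal (2 * p * k\<^sup>2) * Zm s" if s: "s \<ge> 0" for s
      proof -
        have cs: "continuous_on UNIV (\<lambda>x. ut s x)"
        proof -
          have "continuous_on UNIV (\<lambda>x::real^3. (s, x))" by (intro continuous_intros)
          from continuous_on_compose2[OF ucont this] show ?thesis by simp
        qed
        have um[measurable]: "(\<lambda>x. ut s x) \<in> borel_measurable borel"
          using cs by (simp add: borel_measurable_continuous_onI)
        have ut0: "ut s x \<ge> 0" for x unfolding ut_def using nonneg by simp
        have "ennreal (p * k) * LH2m s
            = (\<integral>\<^sup>+x. ennreal (p * k) * ennreal ((\<eta> x)\<^sup>2 * ut s x * max (ut s x - k) 0 powr (p - 1)) \<partial>lborel)"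
          unfolding LH2m_def by (rule nn_integral_cmult[symmetric]) measurable
        also have "\<dots> \<le> (\<integral>\<^sup>+x. ennreal p * ennreal ((\<eta> x)\<^sup>2 * ut s x * max (ut s x - k) 0 powr p)
              + ennreal (2 * p * k\<^sup>2) * ennreal ((\<eta> x)\<^sup>2 * max (ut s x - k) 0 powr (p - 1)) \<partial>lborel)"
        proof (rule nn_integral_mono)
          fix x
          have sp: "k * ((\<eta> x)\<^sup>2 * ut s x * max (ut s x - k) 0 powr (p - 1))
            \<le> (\<eta> x)\<^sup>2 * ut s x * max (ut s x - k) 0 powr p + 2 * k\<^sup>2 * ((\<eta> x)\<^sup>2 * max (ut s x - k) 0 powr (p - 1))"
            by (rule second_pt[OF ut0 k p]) simp
          have "p * (k * ((\<eta> x)\<^sup>2 * ut s x * max (ut s x - k) 0 powr (p - 1)))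
            \<le> p * ((\<eta> x)\<^sup>2 * ut s x * max (ut s x - k) 0 powr p + 2 * k\<^sup>2 * ((\<eta> x)\<^sup>2 * max (ut s x - k) 0 powr (p - 1)))"
            using sp p by (intro mult_left_mono) simp_all
          define a where "a = (\<eta> x)\<^sup>2 * ut s x * max (ut s x - k) 0 powr (p - 1)"
          define b where "b = (\<eta> x)\<^sup>2 * ut s x * max (ut s x - k) 0 powr p"
          define c where "c = (\<eta> x)\<^sup>2 * max (ut s x - k) 0 powr (p - 1)"
          have a0: "a \<ge> 0" and b0: "b \<ge> 0" and c0: "c \<ge> 0" unfolding a_def b_def c_def using ut0[of x] by simp_all
          have le: "(p * k) * a \<le> p * b + (2 * p * k\<^sup>2) * c"
            using \<open>p * (k * _) \<le> _\<close> unfolding a_def b_def c_def by (simp add: algebra_simps)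
          have "ennreal (p * k) * ennreal a = ennreal ((p * k) * a)"
            using p k a0 by (simp add: ennreal_mult)
          also have "\<dots> \<le> ennreal (p * b + (2 * p * k\<^sup>2) * c)" by (rule ennreal_leI[OF le])
          also have "\<dots> = ennreal (p * b) + ennreal ((2 * p * k\<^sup>2) * c)"
            using p b0 c0 by (intro ennreal_plus) simp_all
          also have "\<dots> = ennreal p * ennreal b + ennreal (2 * p * k\<^sup>2) * ennreal c"
            using p b0 c0 by (simp add: ennreal_mult)
          finally show "ennreal (p * k) * ennreal ((\<eta> x)\<^sup>2 * ut s x * max (ut s x - k) 0 powr (p - 1))
            \<le> ennreal p * ennreal ((\<eta> x)\<^sup>2 * ut s x * max (ut s x - k) 0 powr p)
              + ennreal (2 * p * k\<^sup>2) * ennreal ((\<eta> x)\<^sup>2 * max (ut s x - k) 0 powr (p - 1))"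
            unfolding a_def b_def c_def .
        qed
        also have "\<dots> = ennreal p * LHm s + ennreal (2 * p * k\<^sup>2) * Zm s"
          unfolding LHm_def Zm_def by (simp add: nn_integral_add nn_integral_cmult)
        finally show ?thesis .
      qed
      have "ennreal (p * k) * (\<integral>\<^sup>+s. LH2m s * indicator I s \<partial>lborel)
          = (\<integral>\<^sup>+s. ennreal (p * k) * (LH2m s * indicator I s) \<partial>lborel)"
        by (rule nn_integral_cmult[symmetric]) measurable
      also have "\<dots> \<le> (\<integral>\<^sup>+s. ennreal (p * \<epsilon>) * (Ltm s * indicator I s) + ennreal (p * C\<epsilon>) * (Ym s * indicator I s)
            + ennreal (2 * p * k\<^sup>2) * (Zm s * indicator I s) \<partial>lborel)"
      proof (rule nn_integral_mono)
        fix s show "ennreal (p * k) * (LH2m s * indicator I s) \<le> ennreal (p * \<epsilon>) * (Ltm s * indicator I s)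
            + ennreal (p * C\<epsilon>) * (Ym s * indicator I s) + ennreal (2 * p * k\<^sup>2) * (Zm s * indicator I s)"
        proof (cases "s \<in> I")
          case True
          have s0: "s > 0" using Ipos[OF True] .
          have "ennreal (p * k) * LH2m s \<le> ennreal p * LHm s + ennreal (2 * p * k\<^sup>2) * Zm s"
            using S5 s0 by simp
          also have "\<dots> \<le> ennreal p * (ennreal \<epsilon> * Ltm s + ennreal C\<epsilon> * Ym s) + ennreal (2 * p * k\<^sup>2) * Zm s"
            by (intro add_right_mono mult_left_mono sliceI[OF s0]) simp
          also have "\<dots> = ennreal (p * \<epsilon>) * Ltm s + ennreal (p * C\<epsilon>) * Ym s + ennreal (2 * p * k\<^sup>2) * Zm s"
            using p eps C\<epsilon> by (simp add: ennreal_mult distrib_left mult.assoc)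
          finally show ?thesis using True by simp
        qed simp
      qed
      also have "\<dots> = ennreal (p * \<epsilon>) * (\<integral>\<^sup>+s. Ltm s * indicator I s \<partial>lborel)
          + ennreal (p * C\<epsilon>) * (\<integral>\<^sup>+s. Ym s * indicator I s \<partial>lborel)
          + ennreal (2 * p * k\<^sup>2) * (\<integral>\<^sup>+s. Zm s * indicator I s \<partial>lborel)"
        by (simp add: nn_integral_add nn_integral_cmult)
      also have "\<dots> \<le> ennreal (p * \<epsilon>) * (\<integral>\<^sup>+s. ?GR s * indicator I s \<partial>lborel)
          + ennreal (p * C\<epsilon>) * (\<integral>\<^sup>+s. Ym s * indicator I s \<partial>lborel)
          + ennreal (2 * p * k\<^sup>2) * (\<integral>\<^sup>+s\<in>{0..T}. (\<integral>\<^sup>+x. ennreal ((\<eta> x)\<^sup>2 * (max (u x s - k) 0) powr (p - 1)) \<partial>lborel) \<partial>lborel)"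
        by (intro add_mono mult_left_mono m2 m3 order_refl) simp_all
      finally show ?thesis unfolding e1 e2 e3 .
    qed
    show "let uk = (\<lambda>x s. max (u x s - k) 0);
           gr = (\<lambda>x s. norm (grad3 (\<lambda>y. \<eta> y * (uk y s) powr (p / 2)) x))
       in
      ennreal (p - 1) * (\<integral>\<^sup>+s\<in>{t..T}. (\<integral>\<^sup>+x. ennreal ((\<eta> x)\<^sup>2 * u x s * (uk x s) powr p) \<partial>lborel) \<partial>lborel)
        \<le> ennreal (\<epsilon> * (p - 1)) *
             (\<integral>\<^sup>+s\<in>{t..T}. (\<integral>\<^sup>+x\<in>ball x0 R. ennreal (newton_pot u x s * (gr x s)\<^sup>2) \<partial>lborel) \<partial>lborel)
          + ennreal (p * C\<epsilon>) * (\<integral>\<^sup>+s\<in>{t..T}. (\<integral>\<^sup>+x\<in>ball x0 R. ennreal ((\<eta> x)\<^sup>2 * (uk x s) powr p) \<partial>lborel) \<partial>lborel)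
      \<and>
      ennreal (p * k) * (\<integral>\<^sup>+s\<in>{t..T}. (\<integral>\<^sup>+x. ennreal ((\<eta> x)\<^sup>2 * u x s * (uk x s) powr (p - 1)) \<partial>lborel) \<partial>lborel)
        \<le> ennreal (p * \<epsilon>) *
             (\<integral>\<^sup>+s\<in>{t..T}. (\<integral>\<^sup>+x. ennreal (newton_pot u x s * (gr x s)\<^sup>2) \<partial>lborel) \<partial>lborel)
          + ennreal (p * C\<epsilon>) * (\<integral>\<^sup>+s\<in>{t..T}. (\<integral>\<^sup>+x. ennreal ((\<eta> x)\<^sup>2 * (uk x s) powr p) \<partial>lborel) \<partial>lborel)
          + ennreal (2 * p * k\<^sup>2) *
             (\<integral>\<^sup>+s\<in>{0..T}. (\<integral>\<^sup>+x. ennreal ((\<eta> x)\<^sup>2 * (uk x s) powr (p - 1)) \<partial>lborel) \<partial>lborel)"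
      unfolding Let_def using G1 G2 by (intro conjI)
  qed
qed

end
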